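(* Fix $N\in\mathbb N$ and $0<\gamma\le\frac12$. Let $\mathcal M=\mathbb T^2$ or $\mathbb R^2$ and let $\nu_N:\mathcal M\to\mathbb R$ satisfy $|\nu_N(x)|\lesssim_AN^2\langle Nx\rangle^{-A}$ for all $x\in\mathcal M$ and every finite $A\ge1$. Let $0<t\le1$ and define $H_{t,\gamma}(x)=|t-|x||^{-\gamma}$ and $\widetilde H_{t,\gamma}(x)=|t^2-|x|^2|^{-\gamma}$ for $x\in\mathcal M\setminus\mathbb S^1(t)$, and set $H_{N,t,\gamma}=H_{t,\gamma}*\nu_N$ and $\widetilde H_{N,t,\gamma}=\widetilde H_{t,\gamma}*\nu_N$. Then $$|H_{N,t,\gamma}(x)|\lesssim\min\{N^\gamma,|t-|x||^{-\gamma}\}\,\big\langle\log\big(\min\{N,|t-|x||^{-1}\}\big)\big\rangle,$$ $$|\widetilde H_{N,t,\gamma}(x)|\lesssim\min\{N^{2\gamma},|t^2-|x|^2|^{-\gamma}\}\,\big\langle\log\big(\min\{N,|t-|x||^{-1}\}\big)\big\rangle$$ for any $x\in\mathcal M\cap B(0,10)$, with implicit constants independent of $N$.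
   Context: $\mathbb T^2=(\mathbb R/2\pi\mathbb Z)^2\cong[-\pi,\pi)^2$ (so $B(0,10)$ contains a copy of it); $|x|$ denotes the Euclidean norm on $\mathbb R^2$ or the distance to $0$ on $\mathbb T^2$. $\mathbb S^1(t)$ is the circle of radius $t$ centered at $0$. $\langle y\rangle=(1+|y|^2)^{1/2}$. Convolution is on $\mathcal M$ (normalizing constants irrelevant). *)

theory Defs
  imports "HOL-Analysis.Analysis"
begin

definition jbr :: "real \<Rightarrow> real" where
  "jbr y = sqrt (1 + y\<^sup>2)"

text \<open>The lattice 2\<pi>Z^2; the torus T^2 = R^2 / (2\<pi>Z)^2 is modelled by R^2 with
  2\<pi>-periodic functions; fundamental cell [-\<pi>,\<pi>)^2.\<close>
definition lattice2pi :: "(real^2) set" where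
  "lattice2pi = {v. \<forall>i. \<exists>k::int. v $ i = 2 * pi * of_int k}"

definition torus_cell :: "(real^2) set" where
  "torus_cell = {y. \<forall>i. - pi \<le> y $ i \<and> y $ i < pi}"

definition tnorm :: "real^2 \<Rightarrow> real" where
  "tnorm z = infdist z lattice2pi"

text \<open>Radial profiles: H_{t,\<gamma>} and tilde H_{t,\<gamma>} as functions of r = |x|
  (value on the circle r = t irrelevant: null set; set to 0).\<close>
definition Hprof :: "real \<Rightarrow> real \<Rightarrow> real \<Rightarrow> real" where
  "Hprof t \<gamma> r = (if r = t then 0 else \<bar>t - r\<bar> powr (- \<gamma>))"

definition Htprof :: "real \<Rightarrow> real \<Rightarrow> real \<Rightarrow> real" where
  "Htprof t \<gamma> r = (if r = t then 0 else \<bar>t\<^sup>2 - r\<^sup>2\<bar> powr (- \<gamma>))"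

text \<open>Right-hand sides of the bounds, with |t-|x||^{-1} = \<infinity> on the circle.\<close>
definition logfac :: "nat \<Rightarrow> real \<Rightarrow> real \<Rightarrow> real" where
  "logfac N t r = jbr (ln (if r = t then real N else min (real N) (1 / \<bar>t - r\<bar>)))"

definition bound1 :: "nat \<Rightarrow> real \<Rightarrow> real \<Rightarrow> real \<Rightarrow> real" where
  "bound1 N t \<gamma> r =
     (if r = t then real N powr \<gamma> else min (real N powr \<gamma>) (\<bar>t - r\<bar> powr (- \<gamma>)))
     * logfac N t r"

definition bound2 :: "nat \<Rightarrow> real \<Rightarrow> real \<Rightarrow> real \<Rightarrow> real" where
  "bound2 N t \<gamma> r =
     (if r = t then real N powr (2 * \<gamma>) else min (real N powr (2 * \<gamma>)) (\<bar>t\<^sup>2 - r\<^sup>2\<bar> powr (- \<gamma>)))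
     * logfac N t r"

definition convR2 :: "(real^2 \<Rightarrow> real) \<Rightarrow> (real^2 \<Rightarrow> real) \<Rightarrow> real^2 \<Rightarrow> real" where
  "convR2 f g x = (\<integral>y. f (x - y) * g y \<partial>lborel)"

definition convT2 :: "(real^2 \<Rightarrow> real) \<Rightarrow> (real^2 \<Rightarrow> real) \<Rightarrow> real^2 \<Rightarrow> real" where
  "convT2 f g x = (LINT y:torus_cell|lborel. f (x - y) * g y)"

end

theory Submission
  imports Defs
begin


lemma vector2_chi: "(vector [a, b] :: real^2) = (\<chi> i. if i = 1 then a else b)"
  by (auto simp: vec_eq_iff forall_2)

lemma meas_phi: "(\<lambda>p::real\<times>real. vector [fst p, snd p] :: real^2) \<in> (lborel \<Otimes>\<^sub>M lborel) \<rightarrow>\<^sub>M borel"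
proof -
  have "continuous_on UNIV (\<lambda>p::real\<times>real. (\<chi> i. if i = 1 then fst p else snd p) :: real^2)"
    proof (intro continuous_on_vec_lambda) fix i :: 2 show "continuous_on UNIV (\<lambda>x::real\<times>real. if i = 1 then fst x else snd x)" by (cases "i = 1") (simp_all add: continuous_on_fst continuous_on_snd continuous_on_id) qed
  then have "(\<lambda>p::real\<times>real. (\<chi> i. if i = 1 then fst p else snd p) :: real^2) \<in> borel_measurable borel"
    by (rule borel_measurable_continuous_onI)
  then show ?thesis unfolding vector2_chi lborel_prod by simp
qed


lemma norm_vec2: "norm (vector [a, b] :: real^2) = sqrt (a\<^sup>2 + b\<^sup>2)"
  by (simp add: norm_vec_def L2_set_def sum_2)

lemma norm_vec2': "norm (z :: real^2) = sqrt ((z$1)\<^sup>2 + (z$2)\<^sup>2)"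
  by (simp add: norm_vec_def L2_set_def sum_2)

lemma Basis_real2: "(Basis :: (real^2) set) = {axis 1 1, axis 2 1}"
  by (auto simp: Basis_vec_def UNIV_2)

lemma prod_Basis_real2: "(\<Prod>b\<in>(Basis :: (real^2) set). f b) = f (axis 1 1) * f (axis 2 1)"
  by (simp add: Basis_real2 axis_eq_axis)

lemma lborel2: "(lborel :: (real^2) measure) = distr (lborel \<Otimes>\<^sub>M lborel) borel (\<lambda>p. vector [fst p, snd p])"
proof (rule lborel_eqI)
  fix l u :: "real^2" assume le0: "\<And>b. b \<in> Basis \<Longrightarrow> l \<bullet> b \<le> u \<bullet> b"
  have le: "l$1 \<le> u$1" "l$2 \<le> u$2"
    using le0[of "axis 1 1"] le0[of "axis 2 1"] by (auto simp: Basis_real2 inner_axis)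
  note meas = meas_phi
  have pre: "(\<lambda>p::real\<times>real. vector [fst p, snd p] :: real^2) -` box l u \<inter> space (lborel \<Otimes>\<^sub>M lborel)
      = {l$1<..<u$1} \<times> {l$2<..<u$2}"
    by (auto simp: mem_box_cart forall_2 space_pair_measure)
  show "emeasure (distr (lborel \<Otimes>\<^sub>M lborel) borel (\<lambda>p. vector [fst p, snd p])) (box l u) = (\<Prod>b\<in>Basis. (u - l) \<bullet> b)"
    using le by (simp add: emeasure_distr[OF meas] pre lborel.emeasure_pair_measure_Times prod_Basis_real2 inner_axis ennreal_mult)
qed simp



lemma key_ineq:
  fixes a b c :: real
  assumes "\<bar>a\<bar> \<le> \<bar>b\<bar>" "\<bar>b\<bar> \<le> \<bar>c\<bar>"
  shows "\<bar>c\<bar> - \<bar>b\<bar> \<le> 2 * (sqrt (a\<^sup>2 + c\<^sup>2) - sqrt (a\<^sup>2 + b\<^sup>2))"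
proof -
  define B where "B = sqrt (a\<^sup>2 + b\<^sup>2)"
  define Cc where "Cc = sqrt (a\<^sup>2 + c\<^sup>2)"
  have B2: "B\<^sup>2 = a\<^sup>2 + b\<^sup>2" and C2: "Cc\<^sup>2 = a\<^sup>2 + c\<^sup>2" by (simp_all add: B_def Cc_def)
  have B0: "B \<ge> 0" "Cc \<ge> 0" by (simp_all add: B_def Cc_def)
  have "a\<^sup>2 \<le> b\<^sup>2" "b\<^sup>2 \<le> c\<^sup>2" using assms by (simp_all add: abs_le_square_iff)
  have Bb: "B \<le> 2 * \<bar>b\<bar>"
  proof -
    have "(2 * \<bar>b\<bar>)\<^sup>2 = 4 * b\<^sup>2" by (simp add: power_mult_distrib)
    then have "B\<^sup>2 \<le> (2 * \<bar>b\<bar>)\<^sup>2" using B2 \<open>a\<^sup>2 \<le> b\<^sup>2\<close> zero_le_power2[of b] by linarith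
    from power2_le_imp_le[OF this] show ?thesis by simp
  qed
  have Cc: "Cc \<le> 2 * \<bar>c\<bar>"
  proof -
    have "a\<^sup>2 \<le> c\<^sup>2" using \<open>a\<^sup>2 \<le> b\<^sup>2\<close> \<open>b\<^sup>2 \<le> c\<^sup>2\<close> by linarith
    moreover have "(2 * \<bar>c\<bar>)\<^sup>2 = 4 * c\<^sup>2" by (simp add: power_mult_distrib)
    ultimately have "Cc\<^sup>2 \<le> (2 * \<bar>c\<bar>)\<^sup>2" using C2 zero_le_power2[of c] by linarith
    from power2_le_imp_le[OF this] show ?thesis by simp
  qed
  have BC: "B \<le> Cc" using \<open>b\<^sup>2 \<le> c\<^sup>2\<close> by (simp add: B_def Cc_def)
  have eq: "(Cc - B) * (Cc + B) = (\<bar>c\<bar> - \<bar>b\<bar>) * (\<bar>c\<bar> + \<bar>b\<bar>)"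
    using B2 C2 by (simp add: algebra_simps power2_eq_square)
  show ?thesis
  proof (cases "\<bar>c\<bar> + \<bar>b\<bar> = 0")
    case True then have "b = 0" "c = 0" by auto
    then show ?thesis by simp
  next
    case False
    then have pos: "\<bar>c\<bar> + \<bar>b\<bar> > 0" by simp
    have "(\<bar>c\<bar> - \<bar>b\<bar>) * (\<bar>c\<bar> + \<bar>b\<bar>) \<le> (Cc - B) * (2 * (\<bar>c\<bar> + \<bar>b\<bar>))"
      unfolding eq[symmetric] using BC Bb Cc by (intro mult_left_mono) auto
    then have "(\<bar>c\<bar> - \<bar>b\<bar>) * (\<bar>c\<bar> + \<bar>b\<bar>) \<le> (2 * (Cc - B)) * (\<bar>c\<bar> + \<bar>b\<bar>)" by (simp add: algebra_simps)
    then show ?thesis using pos unfolding B_def Cc_def by (simp add: mult_le_cancel_right)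
  qed
qed

lemma section_bound:
  fixes a t s :: real assumes s: "s > 0"
  shows "emeasure lborel {b::real. \<bar>a\<bar> \<le> \<bar>b\<bar> \<and> \<bar>t - sqrt (a\<^sup>2 + b\<^sup>2)\<bar> < s} \<le> ennreal (16 * s)"
proof (cases "{b::real. \<bar>a\<bar> \<le> \<bar>b\<bar> \<and> \<bar>t - sqrt (a\<^sup>2 + b\<^sup>2)\<bar> < s} = {}")
  case True then show ?thesis unfolding True by simp
next
  case False
  define E where "E = {b::real. \<bar>a\<bar> \<le> \<bar>b\<bar> \<and> \<bar>t - sqrt (a\<^sup>2 + b\<^sup>2)\<bar> < s}"
  obtain b0 where b0: "b0 \<in> E" using False E_def by auto
  define \<beta> where "\<beta> = \<bar>b0\<bar>"
  have close: "\<bar>\<bar>b\<bar> - \<beta>\<bar> \<le> 4 * s" if "b \<in> E" for b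
  proof -
    have gen: "\<bar>c\<bar> - \<bar>b\<bar> \<le> 4 * s" if "b \<in> E" "c \<in> E" "\<bar>b\<bar> \<le> \<bar>c\<bar>" for b c
    proof -
      have "\<bar>c\<bar> - \<bar>b\<bar> \<le> 2 * (sqrt (a\<^sup>2 + c\<^sup>2) - sqrt (a\<^sup>2 + b\<^sup>2))"
        using that by (intro key_ineq) (auto simp: E_def)
      moreover have "sqrt (a\<^sup>2 + c\<^sup>2) - sqrt (a\<^sup>2 + b\<^sup>2) < 2 * s" using that by (auto simp: E_def)
      ultimately show ?thesis by (smt (verit))
    qed
    show ?thesis
    proof (cases "\<bar>b\<bar> \<le> \<beta>")
      case True then show ?thesis using gen[OF that b0] \<beta>_def by auto
    next
      case False then show ?thesis using gen[OF b0 that] \<beta>_def by auto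
    qed
  qed
  have sub: "E \<subseteq> {\<beta> - 4 * s..\<beta> + 4 * s} \<union> {-\<beta> - 4 * s..-\<beta> + 4 * s}"
  proof
    fix b assume "b \<in> E"
    from close[OF this] show "b \<in> {\<beta> - 4 * s..\<beta> + 4 * s} \<union> {-\<beta> - 4 * s..-\<beta> + 4 * s}"
      by (cases "b \<ge> 0") auto
  qed
  have "emeasure lborel E \<le> emeasure lborel ({\<beta> - 4 * s..\<beta> + 4 * s} \<union> {-\<beta> - 4 * s..-\<beta> + 4 * s})"
    by (rule emeasure_mono[OF sub]) simp
  also have "\<dots> \<le> emeasure lborel {\<beta> - 4 * s..\<beta> + 4 * s} + emeasure lborel {-\<beta> - 4 * s..-\<beta> + 4 * s}"
    by (rule emeasure_subadditive) auto
  also have "\<dots> = ennreal (16 * s)" using s by (simp add: ennreal_plus[symmetric] del: ennreal_plus)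
  finally show ?thesis unfolding E_def .
qed



lemma emeasure_lborel2:
  assumes "T \<in> sets (borel :: (real^2) measure)"
  shows "emeasure lborel T = emeasure (lborel \<Otimes>\<^sub>M lborel) ((\<lambda>p. vector [fst p, snd p]) -` T)"
proof -
  have "emeasure lborel T = emeasure (distr (lborel \<Otimes>\<^sub>M lborel) borel (\<lambda>p. vector [fst p, snd p])) T"
    by (subst lborel2[symmetric]) simp
  also have "\<dots> = emeasure (lborel \<Otimes>\<^sub>M lborel) ((\<lambda>p. vector [fst p, snd p]) -` T \<inter> space (lborel \<Otimes>\<^sub>M lborel))"
    by (rule emeasure_distr[OF meas_phi assms])
  finally show ?thesis by (simp add: space_pair_measure)
qed

lemma layer_ball:
  fixes x :: "real^2" assumes s: "s > 0" and R: "R > 0"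
  shows "emeasure lborel (ball x R \<inter> {z. \<bar>t - norm z\<bar> < s}) \<le> ennreal (64 * s * R)"
proof -
  define \<phi> where "\<phi> = (\<lambda>p::real\<times>real. vector [fst p, snd p] :: real^2)"
  define S where "S = ball x R \<inter> {z. \<bar>t - norm z\<bar> < s}"
  define S1 where "S1 = S \<inter> {z. \<bar>z$2\<bar> \<le> \<bar>z$1\<bar>}"
  define S2 where "S2 = S \<inter> {z. \<bar>z$1\<bar> \<le> \<bar>z$2\<bar>}"
  have Sb: "S \<in> sets borel" unfolding S_def by measurable
  have S1b: "S1 \<in> sets borel" unfolding S1_def using Sb by measurable
  have S2b: "S2 \<in> sets borel" unfolding S2_def using Sb by measurable
  have pS1: "\<phi> -` S1 \<in> sets (lborel \<Otimes>\<^sub>M lborel)"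
    using measurable_sets[OF meas_phi S1b] by (simp add: \<phi>_def space_pair_measure)
  have pS2: "\<phi> -` S2 \<in> sets (lborel \<Otimes>\<^sub>M lborel)"
    using measurable_sets[OF meas_phi S2b] by (simp add: \<phi>_def space_pair_measure)
  have comp: "\<bar>z$i - x$i\<bar> < R" if "z \<in> ball x R" for z and i
  proof -
    have "\<bar>(z - x)$i\<bar> \<le> norm (z - x)" by (rule component_le_norm_cart)
    also have "\<dots> < R" using that by (simp add: dist_norm norm_minus_commute)
    finally show ?thesis by simp
  qed
  have e2: "emeasure lborel S2 \<le> ennreal (32 * s * R)"
  proof -
    have "emeasure lborel S2 = emeasure (lborel \<Otimes>\<^sub>M lborel) (\<phi> -` S2)"
      unfolding \<phi>_def by (rule emeasure_lborel2[OF S2b])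
    also have "\<dots> = (\<integral>\<^sup>+a. emeasure lborel (Pair a -` (\<phi> -` S2)) \<partial>lborel)"
      by (rule lborel.emeasure_pair_measure_alt[OF pS2])
    also have "\<dots> \<le> (\<integral>\<^sup>+a. ennreal (16 * s) * indicator {x$1 - R<..<x$1 + R} a \<partial>lborel)"
    proof (rule nn_integral_mono)
      fix a :: real
      show "emeasure lborel (Pair a -` (\<phi> -` S2)) \<le> ennreal (16 * s) * indicator {x$1 - R<..<x$1 + R} a"
      proof (cases "a \<in> {x$1 - R<..<x$1 + R}")
        case True
        have "Pair a -` (\<phi> -` S2) \<subseteq> {b::real. \<bar>a\<bar> \<le> \<bar>b\<bar> \<and> \<bar>t - sqrt (a\<^sup>2 + b\<^sup>2)\<bar> < s}"
          by (auto simp: \<phi>_def S2_def S_def norm_vec2)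
        then have "emeasure lborel (Pair a -` (\<phi> -` S2)) \<le> emeasure lborel {b::real. \<bar>a\<bar> \<le> \<bar>b\<bar> \<and> \<bar>t - sqrt (a\<^sup>2 + b\<^sup>2)\<bar> < s}"
          by (intro emeasure_mono) auto
        also have "\<dots> \<le> ennreal (16 * s)" by (rule section_bound[OF s])
        finally show ?thesis using True by simp
      next
        case False
        have "Pair a -` (\<phi> -` S2) = {}"
        proof -
          have "\<bar>a - x$1\<bar> < R" if "b \<in> Pair a -` (\<phi> -` S2)" for b
            using comp[of "vector [a, b]" 1] that by (auto simp: \<phi>_def S2_def S_def)
          then show ?thesis using False by (fastforce simp: abs_less_iff)
        qed
        then show ?thesis by simp
      qed
    qed
    also have "\<dots> = ennreal (16 * s) * emeasure lborel {x$1 - R<..<x$1 + R}"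
      by (simp add: nn_integral_cmult)
    also have "\<dots> = ennreal (32 * s * R)"
      using R s by (simp add: ennreal_mult[symmetric])
    finally show ?thesis .
  qed
  have e1: "emeasure lborel S1 \<le> ennreal (32 * s * R)"
  proof -
    have "emeasure lborel S1 = emeasure (lborel \<Otimes>\<^sub>M lborel) (\<phi> -` S1)"
      unfolding \<phi>_def by (rule emeasure_lborel2[OF S1b])
    also have "\<dots> = (\<integral>\<^sup>+b. emeasure lborel ((\<lambda>a. (a, b)) -` (\<phi> -` S1)) \<partial>lborel)"
      by (rule lborel_pair.emeasure_pair_measure_alt2[OF pS1])
    also have "\<dots> \<le> (\<integral>\<^sup>+b. ennreal (16 * s) * indicator {x$2 - R<..<x$2 + R} b \<partial>lborel)"
    proof (rule nn_integral_mono)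
      fix b :: real
      show "emeasure lborel ((\<lambda>a. (a, b)) -` (\<phi> -` S1)) \<le> ennreal (16 * s) * indicator {x$2 - R<..<x$2 + R} b"
      proof (cases "b \<in> {x$2 - R<..<x$2 + R}")
        case True
        have "(\<lambda>a. (a, b)) -` (\<phi> -` S1) \<subseteq> {a::real. \<bar>b\<bar> \<le> \<bar>a\<bar> \<and> \<bar>t - sqrt (b\<^sup>2 + a\<^sup>2)\<bar> < s}"
          by (auto simp: \<phi>_def S1_def S_def norm_vec2 add.commute)
        then have "emeasure lborel ((\<lambda>a. (a, b)) -` (\<phi> -` S1)) \<le> emeasure lborel {a::real. \<bar>b\<bar> \<le> \<bar>a\<bar> \<and> \<bar>t - sqrt (b\<^sup>2 + a\<^sup>2)\<bar> < s}"
          by (intro emeasure_mono) auto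
        also have "\<dots> \<le> ennreal (16 * s)" by (rule section_bound[OF s])
        finally show ?thesis using True by simp
      next
        case False
        have "(\<lambda>a. (a, b)) -` (\<phi> -` S1) = {}"
        proof -
          have "\<bar>b - x$2\<bar> < R" if "a \<in> (\<lambda>a. (a, b)) -` (\<phi> -` S1)" for a
            using comp[of "vector [a, b]" 2] that by (auto simp: \<phi>_def S1_def S_def)
          then show ?thesis using False by (fastforce simp: abs_less_iff)
        qed
        then show ?thesis by simp
      qed
    qed
    also have "\<dots> = ennreal (16 * s) * emeasure lborel {x$2 - R<..<x$2 + R}"
      by (simp add: nn_integral_cmult)
    also have "\<dots> = ennreal (32 * s * R)"
      using R s by (simp add: ennreal_mult[symmetric])
    finally show ?thesis .
  qed
  have "S \<subseteq> S1 \<union> S2" by (auto simp: S1_def S2_def)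
  then have "emeasure lborel S \<le> emeasure lborel (S1 \<union> S2)" by (intro emeasure_mono) (use S1b S2b in auto)
  also have "\<dots> \<le> emeasure lborel S1 + emeasure lborel S2" by (rule emeasure_subadditive) (use S1b S2b in auto)
  also have "\<dots> \<le> ennreal (32 * s * R) + ennreal (32 * s * R)" by (intro add_mono e1 e2)
  also have "\<dots> = ennreal (64 * s * R)" using s R by (simp add: ennreal_plus[symmetric] del: ennreal_plus)
  finally show ?thesis unfolding S_def .
qed


lemma dyadic_exists:
  fixes q :: real assumes "0 < q" "q < 1"
  shows "\<exists>j::nat. (1/2)^(Suc j) \<le> q \<and> q < (1/2)^j"
proof -
  obtain n where n: "(1/2::real)^n < q" using real_arch_pow_inv[OF assms(1), of "1/2"] by auto
  define m where "m = (LEAST n. (1/2::real)^n \<le> q)"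
  have m1: "(1/2::real)^m \<le> q" unfolding m_def by (rule LeastI[of _ n]) (use n in simp)
  have m0: "m \<noteq> 0"
  proof
    assume "m = 0" with m1 assms show False by simp
  qed
  then obtain j where j: "m = Suc j" by (cases m) auto
  have "\<not> (1/2::real)^j \<le> q" using not_less_Least[of j "\<lambda>n. (1/2::real)^n \<le> q"] j m_def by simp
  then show ?thesis using m1 j by auto
qed

lemma ennreal_le_suminf: "(f::nat \<Rightarrow> ennreal) j \<le> suminf f"
proof -
  have "sum f {j} \<le> suminf f" by (rule sum_le_suminf) (auto intro: summableI)
  then show ?thesis by simp
qed

lemma layer_tilde:
  fixes t s :: real assumes s: "s > 0"
  shows "emeasure lborel {z::real^2. \<bar>t\<^sup>2 - (norm z)\<^sup>2\<bar> < s} \<le> ennreal (2 * pi * s)"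
proof (cases "t\<^sup>2 \<le> s")
  case True
  define \<rho> where "\<rho> = sqrt (t\<^sup>2 + s)"
  have "{z::real^2. \<bar>t\<^sup>2 - (norm z)\<^sup>2\<bar> < s} \<subseteq> ball 0 \<rho>"
  proof
    fix z :: "real^2" assume "z \<in> {z. \<bar>t\<^sup>2 - (norm z)\<^sup>2\<bar> < s}"
    then have "(norm z)\<^sup>2 < t\<^sup>2 + s" by auto
    then have "norm z < \<rho>" unfolding \<rho>_def using real_less_rsqrt by blast
    then show "z \<in> ball 0 \<rho>" by simp
  qed
  then have "emeasure lborel {z::real^2. \<bar>t\<^sup>2 - (norm z)\<^sup>2\<bar> < s} \<le> emeasure lborel (ball (0::real^2) \<rho>)"
    by (intro emeasure_mono) auto
  also have "\<dots> = ennreal (pi * (t\<^sup>2 + s))" using s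
    by (simp add: emeasure_ball unit_ball_vol_2 \<rho>_def add_nonneg_nonneg)
  also have "\<dots> \<le> ennreal (2 * pi * s)" using True by (intro ennreal_leI) auto
  finally show ?thesis .
next
  case False
  define \<rho> where "\<rho> = sqrt (t\<^sup>2 + s)"
  define \<rho>0 where "\<rho>0 = sqrt (t\<^sup>2 - s)"
  have r0: "\<rho>0 \<ge> 0" "\<rho>0 < \<rho>" using False s by (auto simp: \<rho>0_def \<rho>_def)
  have "{z::real^2. \<bar>t\<^sup>2 - (norm z)\<^sup>2\<bar> < s} \<subseteq> ball 0 \<rho> - cball 0 \<rho>0"
  proof
    fix z :: "real^2" assume "z \<in> {z. \<bar>t\<^sup>2 - (norm z)\<^sup>2\<bar> < s}"
    then have "(norm z)\<^sup>2 < t\<^sup>2 + s" "t\<^sup>2 - s < (norm z)\<^sup>2" by auto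
    then have "norm z < \<rho>" "\<rho>0 < norm z" unfolding \<rho>_def \<rho>0_def
      using real_less_rsqrt real_less_lsqrt by (blast, smt (verit, ccfv_SIG) norm_ge_zero real_sqrt_less_iff real_sqrt_abs)
    then show "z \<in> ball 0 \<rho> - cball 0 \<rho>0" by simp
  qed
  then have "emeasure lborel {z::real^2. \<bar>t\<^sup>2 - (norm z)\<^sup>2\<bar> < s} \<le> emeasure lborel (ball (0::real^2) \<rho> - cball 0 \<rho>0)"
    by (intro emeasure_mono) auto
  also have "\<dots> = emeasure lborel (ball (0::real^2) \<rho>) - emeasure lborel (cball (0::real^2) \<rho>0)"
    using r0 emeasure_lborel_cball_finite[of 0 \<rho>0] by (intro emeasure_Diff) (auto simp: less_top[symmetric])
  also have "\<dots> = ennreal (pi * (t\<^sup>2 + s)) - ennreal (pi * (t\<^sup>2 - s))" using s r0 False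
    by (simp add: emeasure_ball emeasure_cball unit_ball_vol_2 \<rho>_def \<rho>0_def add_nonneg_nonneg)
  also have "\<dots> = ennreal (2 * pi * s)" using False s
    by (subst ennreal_minus) (auto simp: algebra_simps)
  finally show ?thesis .
qed


lemma half_pow_powr: "((1/2::real)^n) powr (-\<gamma>) = 2 powr (\<gamma> * real n)"
proof -
  have "(1/2::real)^n = 2 powr (- real n)"
    by (simp add: powr_minus powr_realpow power_one_over inverse_eq_divide)
  then show ?thesis by (simp add: powr_powr mult.commute)
qed

lemma layer_integral:
  fixes g :: "real^2 \<Rightarrow> real"
  assumes B: "B \<in> sets borel" and g: "g \<in> borel_measurable borel" and g0: "\<And>z. 0 \<le> g z"
    and mB: "emeasure lborel B \<le> ennreal m" and m: "m \<ge> 0"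
    and lay: "\<And>s. s > 0 \<Longrightarrow> emeasure lborel (B \<inter> {z. g z < s}) \<le> ennreal (c * s)"
    and ga: "0 < \<gamma>" "\<gamma> < 1" and rho: "\<rho> > 0" and c: "c \<ge> 0"
  shows "(\<integral>\<^sup>+z. ennreal (g z powr (-\<gamma>)) * indicator B z \<partial>lborel)
     \<le> ennreal (m * \<rho> powr (-\<gamma>) + c * \<rho> powr (1-\<gamma>) * 2 powr \<gamma> / (1 - 2 powr (\<gamma>-1)))"
proof -
  define a where "a j = \<rho> powr (-\<gamma>) * 2 powr (\<gamma> * real (Suc j))" for j :: nat
  define thr where "thr j = \<rho> * (1/2::real)^j" for j :: nat
  define Bj where "Bj j = B \<inter> {z. g z < thr j}" for j
  define r where "r = (2::real) powr (\<gamma> - 1)"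
  define K0 where "K0 = c * \<rho> powr (1-\<gamma>) * 2 powr \<gamma>"
  have Bj: "Bj j \<in> sets borel" for j unfolding Bj_def using B g by measurable
  have a0: "a j \<ge> 0" for j by (simp add: a_def)
  have thr0: "thr j > 0" for j using rho by (simp add: thr_def)
  have pw: "ennreal (g z powr (-\<gamma>)) * indicator B z
      \<le> ennreal (\<rho> powr (-\<gamma>)) * indicator B z + (\<Sum>j. ennreal (a j) * indicator (Bj j) z)" for z
  proof (cases "z \<in> B")
    case False then show ?thesis by simp
  next
    case True
    show ?thesis
    proof (cases "g z = 0 \<or> \<rho> \<le> g z")
      case True
      have "g z powr (-\<gamma>) \<le> \<rho> powr (-\<gamma>)"
      proof (cases "g z = 0")
        case True then show ?thesis by simp
      next
        case False
        then have "\<rho> \<le> g z" using \<open>g z = 0 \<or> \<rho> \<le> g z\<close> by auto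
        then show ?thesis using rho ga by (intro powr_mono2') auto
      qed
      then have "ennreal (g z powr (-\<gamma>)) * indicator B z \<le> ennreal (\<rho> powr (-\<gamma>)) * indicator B z"
        by (intro mult_right_mono ennreal_leI) auto
      then show ?thesis by (intro add_increasing2) auto
    next
      case False
      then have gz: "0 < g z" "g z < \<rho>" using g0[of z] by auto
      obtain j where j: "(1/2)^(Suc j) \<le> g z / \<rho>" "g z / \<rho> < (1/2)^j"
        using dyadic_exists[of "g z / \<rho>"] gz rho by auto
      have lo: "\<rho> * (1/2)^(Suc j) \<le> g z" using j(1) rho by (simp add: field_simps)
      have hi: "g z < thr j" using j(2) rho by (simp add: thr_def field_simps)
      have "g z powr (-\<gamma>) \<le> (\<rho> * (1/2)^(Suc j)) powr (-\<gamma>)"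
        using lo rho ga by (intro powr_mono2') auto
      also have "\<dots> = a j" using rho
        using half_pow_powr[of "Suc j" \<gamma>] by (simp add: a_def powr_mult del: power_Suc)
      finally have "ennreal (g z powr (-\<gamma>)) * indicator B z \<le> ennreal (a j) * indicator (Bj j) z"
        using True hi by (simp add: Bj_def ennreal_leI)
      also have "\<dots> \<le> (\<Sum>j. ennreal (a j) * indicator (Bj j) z)" by (rule ennreal_le_suminf)
      finally show ?thesis by (intro add_increasing) auto
    qed
  qed
  have "(\<integral>\<^sup>+z. ennreal (g z powr (-\<gamma>)) * indicator B z \<partial>lborel)
      \<le> (\<integral>\<^sup>+z. ennreal (\<rho> powr (-\<gamma>)) * indicator B z + (\<Sum>j. ennreal (a j) * indicator (Bj j) z) \<partial>lborel)"
    by (rule nn_integral_mono) (rule pw)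
  also have "\<dots> = (\<integral>\<^sup>+z. ennreal (\<rho> powr (-\<gamma>)) * indicator B z \<partial>lborel) + (\<integral>\<^sup>+z. (\<Sum>j. ennreal (a j) * indicator (Bj j) z) \<partial>lborel)"
    using B Bj by (intro nn_integral_add) auto
  also have "(\<integral>\<^sup>+z. (\<Sum>j. ennreal (a j) * indicator (Bj j) z) \<partial>lborel) = (\<Sum>j. \<integral>\<^sup>+z. ennreal (a j) * indicator (Bj j) z \<partial>lborel)"
    by (rule nn_integral_suminf) (use Bj in auto)
  also have "(\<integral>\<^sup>+z. ennreal (\<rho> powr (-\<gamma>)) * indicator B z \<partial>lborel) = ennreal (\<rho> powr (-\<gamma>)) * emeasure lborel B"
    using B by (simp add: nn_integral_cmult_indicator)
  also have "(\<Sum>j. \<integral>\<^sup>+z. ennreal (a j) * indicator (Bj j) z \<partial>lborel) = (\<Sum>j. ennreal (a j) * emeasure lborel (Bj j))"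
    using Bj by (simp add: nn_integral_cmult_indicator)
  also have "(\<Sum>j. ennreal (a j) * emeasure lborel (Bj j)) \<le> (\<Sum>j. ennreal (K0 * r^j))"
  proof (rule suminf_le)
    fix j
    have "ennreal (a j) * emeasure lborel (Bj j) \<le> ennreal (a j) * ennreal (c * thr j)"
      unfolding Bj_def by (intro mult_left_mono lay thr0) auto
    also have "\<dots> = ennreal (a j * (c * thr j))" by (rule ennreal_mult[symmetric]) (use a0 c thr0[of j] in auto)
    also have "a j * (c * thr j) = K0 * r^j"
    proof -
      have "(1/2::real)^j = 2 powr (- real j)" by (simp add: powr_minus powr_realpow power_one_over inverse_eq_divide)
      moreover have "r^j = 2 powr (real j * (\<gamma> - 1))" unfolding r_def by (simp add: powr_power)
      moreover have "\<rho> powr (-\<gamma>) * \<rho> = \<rho> powr (1 - \<gamma>)" using rho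
        by (simp add: powr_diff powr_minus divide_inverse mult.commute)
      ultimately show ?thesis unfolding a_def thr_def K0_def
        by (simp add: powr_add[symmetric] algebra_simps)
    qed
    finally show "ennreal (a j) * emeasure lborel (Bj j) \<le> ennreal (K0 * r^j)" .
  qed (auto intro: summableI)
  also have "(\<Sum>j. ennreal (K0 * r^j)) = ennreal (K0 / (1 - r))"
  proof -
    have r0: "0 \<le> r" "r < 1" using ga by (auto simp: r_def intro: powr_less_one)
    have K0: "K0 \<ge> 0" using c by (simp add: K0_def)
    have s: "summable (\<lambda>j. K0 * r^j)" using r0 by (intro summable_mult summable_geometric) auto
    have "(\<Sum>j. ennreal (K0 * r^j)) = ennreal (\<Sum>j. K0 * r^j)"
      using s K0 r0 by (intro suminf_ennreal2) auto
    also have "(\<Sum>j. K0 * r^j) = K0 / (1 - r)"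
      using r0 by (simp add: suminf_mult suminf_geometric divide_inverse)
    finally show ?thesis .
  qed
  also have "ennreal (\<rho> powr (-\<gamma>)) * emeasure lborel B + ennreal (K0 / (1 - r))
     \<le> ennreal (\<rho> powr (-\<gamma>)) * ennreal m + ennreal (K0 / (1 - r))"
    by (intro add_right_mono mult_left_mono mB) auto
  also have "\<dots> = ennreal (m * \<rho> powr (-\<gamma>) + c * \<rho> powr (1-\<gamma>) * 2 powr \<gamma> / (1 - 2 powr (\<gamma>-1)))"
  proof -
    have r0: "r < 1" using ga by (auto simp: r_def intro: powr_less_one)
    have "K0 / (1 - r) \<ge> 0" using c r0 by (simp add: K0_def)
    then show ?thesis using m
      by (simp add: ennreal_mult[symmetric] ennreal_plus[symmetric] K0_def r_def mult.commute del: ennreal_plus)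
  qed
  finally show ?thesis by simp
qed


definition Qc :: "real \<Rightarrow> real" where "Qc \<gamma> = 2 powr \<gamma> / (1 - 2 powr (\<gamma> - 1))"
definition KJ :: "real \<Rightarrow> real" where "KJ \<gamma> = (pi + 64 * Qc \<gamma>) * 2 powr \<gamma>"

lemma Qc_pos: "0 < \<gamma> \<Longrightarrow> \<gamma> < 1 \<Longrightarrow> Qc \<gamma> > 0"
proof -
  assume "0 < \<gamma>" "\<gamma> < 1"
  then have "2 powr (\<gamma> - 1) < (1::real)" by (intro powr_less_one) auto
  then show ?thesis by (simp add: Qc_def)
qed

lemma KJ_pos: "0 < \<gamma> \<Longrightarrow> \<gamma> < 1 \<Longrightarrow> KJ \<gamma> > 0"
  using Qc_pos[of \<gamma>] by (simp add: KJ_def add_pos_pos)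

lemma emeasure_ball2: "R \<ge> 0 \<Longrightarrow> emeasure lborel (ball (x::real^2) R) = ennreal (pi * R\<^sup>2)"
  by (simp add: emeasure_ball unit_ball_vol_2)

lemma powr_neg_anti: "0 < a \<Longrightarrow> a \<le> b \<Longrightarrow> 0 \<le> \<gamma> \<Longrightarrow> (b::real) powr (-\<gamma>) \<le> a powr (-\<gamma>)"
  by (intro powr_mono2') auto

lemma lin_aux: "(X::real) - Y \<le> Z \<Longrightarrow> Z = W \<Longrightarrow> W < R \<Longrightarrow> 2 * R \<le> X \<Longrightarrow> X / 2 \<le> Y"
  by linarith

lemma abs_half_aux:
  fixes a b t R :: real
  assumes "\<bar>a - b\<bar> < R" "2 * R \<le> \<bar>t - a\<bar>" shows "\<bar>t - a\<bar> / 2 \<le> \<bar>t - b\<bar>"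
proof -
  have "\<bar>t - a\<bar> - \<bar>t - b\<bar> \<le> \<bar>(t - a) - (t - b)\<bar>" by (rule abs_triangle_ineq2)
  moreover have "\<bar>(t - a) - (t - b)\<bar> = \<bar>a - b\<bar>" by simp
  ultimately show ?thesis using assms lin_aux by blast
qed

lemma J_bound:
  fixes x :: "real^2"
  assumes ga: "0 < \<gamma>" "\<gamma> < 1" and R: "R > 0"
  shows "(\<integral>\<^sup>+z. ennreal (\<bar>t - norm z\<bar> powr (-\<gamma>)) * indicator (ball x R) z \<partial>lborel)
         \<le> ennreal (KJ \<gamma> * R\<^sup>2 * (max R \<bar>t - norm x\<bar>) powr (-\<gamma>))"
proof -
  define d where "d = \<bar>t - norm x\<bar>"
  have Q: "Qc \<gamma> > 0" using Qc_pos ga by auto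
  show ?thesis
  proof (cases "2 * R \<le> d")
    case True
    have dpos: "d > 0" using True R by auto
    have pw: "ennreal (\<bar>t - norm z\<bar> powr (-\<gamma>)) * indicator (ball x R) z
              \<le> ennreal ((d/2) powr (-\<gamma>)) * indicator (ball x R) z" for z
    proof (cases "z \<in> ball x R")
      case True
      have "\<bar>norm x - norm z\<bar> \<le> norm (x - z)" by (rule norm_triangle_ineq3)
      also have "\<dots> < R" using True by (simp add: dist_norm)
      finally have "d/2 \<le> \<bar>t - norm z\<bar>" using \<open>2 * R \<le> d\<close> unfolding d_def by (rule abs_half_aux)
      then have "\<bar>t - norm z\<bar> powr (-\<gamma>) \<le> (d/2) powr (-\<gamma>)"
        using dpos ga by (intro powr_neg_anti) auto
      then show ?thesis using True by (simp add: ennreal_leI)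
    qed simp
    have "(\<integral>\<^sup>+z. ennreal (\<bar>t - norm z\<bar> powr (-\<gamma>)) * indicator (ball x R) z \<partial>lborel)
        \<le> (\<integral>\<^sup>+z. ennreal ((d/2) powr (-\<gamma>)) * indicator (ball x R) z \<partial>lborel)"
      by (rule nn_integral_mono) (rule pw)
    also have "\<dots> = ennreal ((d/2) powr (-\<gamma>)) * ennreal (pi * R\<^sup>2)"
      using R by (simp add: nn_integral_cmult_indicator emeasure_ball2)
    also have "\<dots> = ennreal ((d/2) powr (-\<gamma>) * (pi * R\<^sup>2))" by (simp add: ennreal_mult)
    also have "\<dots> \<le> ennreal (KJ \<gamma> * R\<^sup>2 * (max R d) powr (-\<gamma>))"
    proof (rule ennreal_leI)
      have mx: "max R d = d" using True R by auto
      have "(d/2) powr (-\<gamma>) = 2 powr \<gamma> * d powr (-\<gamma>)" using dpos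
      proof -
        have "(d/2) powr (-\<gamma>) = d powr (-\<gamma>) / 2 powr (-\<gamma>)" using dpos by (intro powr_divide)
        also have "\<dots> = 2 powr \<gamma> * d powr (-\<gamma>)" by (simp add: powr_minus_divide)
        finally show ?thesis .
      qed
      moreover have "pi * 2 powr \<gamma> \<le> KJ \<gamma>" using Q by (simp add: KJ_def)
      ultimately have "(d/2) powr (-\<gamma>) * (pi * R\<^sup>2) \<le> KJ \<gamma> * (R\<^sup>2 * d powr (-\<gamma>))"
      proof -
        assume eq: "(d/2) powr (-\<gamma>) = 2 powr \<gamma> * d powr (-\<gamma>)" and le: "pi * 2 powr \<gamma> \<le> KJ \<gamma>"
        have "(d/2) powr (-\<gamma>) * (pi * R\<^sup>2) = (pi * 2 powr \<gamma>) * (R\<^sup>2 * d powr (-\<gamma>))"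
          unfolding eq by (simp add: algebra_simps)
        also have "\<dots> \<le> KJ \<gamma> * (R\<^sup>2 * d powr (-\<gamma>))" using le by (intro mult_right_mono) auto
        finally show ?thesis .
      qed
      then show "(d/2) powr (-\<gamma>) * (pi * R\<^sup>2) \<le> KJ \<gamma> * R\<^sup>2 * (max R d) powr (-\<gamma>)"
        unfolding mx by (simp add: mult.assoc)
    qed
    finally show ?thesis unfolding d_def .
  next
    case False
    have "(\<integral>\<^sup>+z. ennreal (\<bar>t - norm z\<bar> powr (-\<gamma>)) * indicator (ball x R) z \<partial>lborel)
       \<le> ennreal (pi * R\<^sup>2 * R powr (-\<gamma>) + (64 * R) * R powr (1-\<gamma>) * 2 powr \<gamma> / (1 - 2 powr (\<gamma>-1)))"
    proof (rule layer_integral)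
      show "emeasure lborel (ball x R) \<le> ennreal (pi * R\<^sup>2)" using R by (simp add: emeasure_ball2)
      fix s :: real assume "s > 0"
      then show "emeasure lborel (ball x R \<inter> {z. \<bar>t - norm z\<bar> < s}) \<le> ennreal (64 * R * s)"
        using layer_ball[of s R x t] R by (simp add: mult.commute mult.left_commute)
    qed (use R ga in auto)
    also have "\<dots> \<le> ennreal (KJ \<gamma> * R\<^sup>2 * (max R d) powr (-\<gamma>))"
    proof (rule ennreal_leI)
      have e1: "R * R powr (1-\<gamma>) = R\<^sup>2 * R powr (-\<gamma>)" using R
        by (simp add: powr_diff powr_minus power2_eq_square divide_inverse)
      have e2: "R powr (-\<gamma>) \<le> 2 powr \<gamma> * (max R d) powr (-\<gamma>)"
      proof -
        have "(2 * R) powr (-\<gamma>) \<le> (max R d) powr (-\<gamma>)"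
          using False R ga by (intro powr_neg_anti) auto
        then have "2 powr (-\<gamma>) * R powr (-\<gamma>) \<le> (max R d) powr (-\<gamma>)"
          using R by (simp add: powr_mult)
        then have "2 powr \<gamma> * (2 powr (-\<gamma>) * R powr (-\<gamma>)) \<le> 2 powr \<gamma> * (max R d) powr (-\<gamma>)"
          by (intro mult_left_mono) auto
        moreover have "2 powr \<gamma> * (2 powr (-\<gamma>) * R powr (-\<gamma>)) = R powr (-\<gamma>)"
          by (simp add: mult.assoc[symmetric] powr_add[symmetric])
        ultimately show ?thesis by simp
      qed
      have "pi * R\<^sup>2 * R powr (-\<gamma>) + (64 * R) * R powr (1-\<gamma>) * 2 powr \<gamma> / (1 - 2 powr (\<gamma>-1))
          = (pi + 64 * Qc \<gamma>) * (R\<^sup>2 * R powr (-\<gamma>))"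
        using e1 by (simp add: Qc_def algebra_simps)
      also have "\<dots> \<le> (pi + 64 * Qc \<gamma>) * (R\<^sup>2 * (2 powr \<gamma> * (max R d) powr (-\<gamma>)))"
        using e2 Q by (intro mult_left_mono) auto
      also have "\<dots> = KJ \<gamma> * R\<^sup>2 * (max R d) powr (-\<gamma>)" by (simp add: KJ_def algebra_simps)
      finally show "pi * R\<^sup>2 * R powr (-\<gamma>) + (64 * R) * R powr (1-\<gamma>) * 2 powr \<gamma> / (1 - 2 powr (\<gamma>-1))
          \<le> KJ \<gamma> * R\<^sup>2 * (max R d) powr (-\<gamma>)" .
    qed
    finally show ?thesis unfolding d_def .
  qed
qed


definition KT :: "real \<Rightarrow> real" where
  "KT \<gamma> = pi * 2 powr \<gamma> + 2 powr \<gamma> * KJ \<gamma> + (pi + 2 * pi * Qc \<gamma>) * 10 powr \<gamma>"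

lemma ball_borel[measurable]: "ball (x::real^2) r \<in> sets borel" by simp

lemma diff_sq_abs:
  fixes a b :: real assumes "0 \<le> a" "0 \<le> b"
  shows "\<bar>a\<^sup>2 - b\<^sup>2\<bar> = \<bar>a - b\<bar> * (a + b)"
proof -
  have "a\<^sup>2 - b\<^sup>2 = (a - b) * (a + b)" by (simp add: power2_eq_square algebra_simps)
  then have "\<bar>a\<^sup>2 - b\<^sup>2\<bar> = \<bar>a - b\<bar> * \<bar>a + b\<bar>" by (simp add: abs_mult)
  then show ?thesis using assms by simp
qed

lemma lin_aux2:
  fixes Z X W T :: real
  assumes "\<bar>Z - X\<bar> \<le> W" "W \<le> \<bar>T - X\<bar> / 2" shows "\<bar>T - X\<bar> / 2 \<le> \<bar>T - Z\<bar>"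
proof -
  have "\<bar>T - X\<bar> - \<bar>T - Z\<bar> \<le> \<bar>(T - X) - (T - Z)\<bar>" by (rule abs_triangle_ineq2)
  moreover have "\<bar>(T - X) - (T - Z)\<bar> = \<bar>Z - X\<bar>" by simp
  ultimately show ?thesis using assms by argo
qed

lemma sq_diff_bound:
  fixes x z :: "real^2" assumes "dist x z < R"
  shows "\<bar>(norm z)\<^sup>2 - (norm x)\<^sup>2\<bar> \<le> R * (2 * norm x + R)"
proof -
  have a: "\<bar>norm z - norm x\<bar> \<le> R" using norm_triangle_ineq3[of z x] assms
    by (simp add: dist_norm norm_minus_commute)
  have b: "norm z + norm x \<le> 2 * norm x + R" using a by linarith
  have "\<bar>(norm z)\<^sup>2 - (norm x)\<^sup>2\<bar> = \<bar>norm z - norm x\<bar> * (norm z + norm x)"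
    by (rule diff_sq_abs) auto
  also have "\<dots> \<le> R * (2 * norm x + R)" using a b by (intro mult_mono) auto
  finally show ?thesis .
qed

lemma Jt_bound:
  fixes x :: "real^2"
  assumes ga: "0 < \<gamma>" "\<gamma> < 1" and R: "R > 0" and t: "t > 0"
  shows "(\<integral>\<^sup>+z. ennreal (\<bar>t\<^sup>2 - (norm z)\<^sup>2\<bar> powr (-\<gamma>)) * indicator (ball x R) z \<partial>lborel)
         \<le> ennreal (KT \<gamma> * R\<^sup>2 * (max (R\<^sup>2) \<bar>t\<^sup>2 - (norm x)\<^sup>2\<bar>) powr (-\<gamma>))"
proof -
  define D where "D = \<bar>t\<^sup>2 - (norm x)\<^sup>2\<bar>"
  define d where "d = \<bar>t - norm x\<bar>"
  have Q: "Qc \<gamma> > 0" using Qc_pos ga by auto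
  have KJp: "KJ \<gamma> > 0" using KJ_pos ga by auto
  have KTge: "pi * 2 powr \<gamma> \<le> KT \<gamma>" "2 powr \<gamma> * KJ \<gamma> \<le> KT \<gamma>" "(pi + 2 * pi * Qc \<gamma>) * 10 powr \<gamma> \<le> KT \<gamma>"
    using Q KJp by (auto simp: KT_def intro!: add_nonneg_nonneg mult_nonneg_nonneg)
  have R2: "R\<^sup>2 > 0" using R by simp
  have "?thesis" if A: "R * (2 * norm x + R) \<le> D / 2"
  proof -
    have Rp: "R * (2 * norm x + R) > 0" using R by (intro mult_pos_pos) (auto intro: add_nonneg_pos)
    have Dpos: "D > 0" using A Rp by linarith
    have pw: "ennreal (\<bar>t\<^sup>2 - (norm z)\<^sup>2\<bar> powr (-\<gamma>)) * indicator (ball x R) z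
              \<le> ennreal ((D/2) powr (-\<gamma>)) * indicator (ball x R) z" for z
    proof (cases "z \<in> ball x R")
      case True
      have "\<bar>(norm z)\<^sup>2 - (norm x)\<^sup>2\<bar> \<le> R * (2 * norm x + R)" using True by (intro sq_diff_bound) simp
      then have "D/2 \<le> \<bar>t\<^sup>2 - (norm z)\<^sup>2\<bar>" using A unfolding D_def by (rule lin_aux2)
      then have "\<bar>t\<^sup>2 - (norm z)\<^sup>2\<bar> powr (-\<gamma>) \<le> (D/2) powr (-\<gamma>)"
        using Dpos ga by (intro powr_neg_anti) auto
      then show ?thesis using True by (simp add: ennreal_leI)
    qed simp
    have "(\<integral>\<^sup>+z. ennreal (\<bar>t\<^sup>2 - (norm z)\<^sup>2\<bar> powr (-\<gamma>)) * indicator (ball x R) z \<partial>lborel)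
        \<le> (\<integral>\<^sup>+z. ennreal ((D/2) powr (-\<gamma>)) * indicator (ball x R) z \<partial>lborel)"
      by (rule nn_integral_mono) (rule pw)
    also have "\<dots> = ennreal ((D/2) powr (-\<gamma>)) * ennreal (pi * R\<^sup>2)"
      using R by (simp add: nn_integral_cmult_indicator emeasure_ball2)
    also have "\<dots> = ennreal ((D/2) powr (-\<gamma>) * (pi * R\<^sup>2))" by (simp add: ennreal_mult)
    also have "\<dots> \<le> ennreal (KT \<gamma> * R\<^sup>2 * (max (R\<^sup>2) D) powr (-\<gamma>))"
    proof (rule ennreal_leI)
      have "R\<^sup>2 \<le> R * (2 * norm x + R)" using R by (simp add: power2_eq_square)
      then have mx: "max (R\<^sup>2) D = D" using A Rp by auto
      have eq: "(D/2) powr (-\<gamma>) = 2 powr \<gamma> * D powr (-\<gamma>)"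
      proof -
        have "(D/2) powr (-\<gamma>) = D powr (-\<gamma>) / 2 powr (-\<gamma>)" using Dpos by (intro powr_divide)
        also have "\<dots> = 2 powr \<gamma> * D powr (-\<gamma>)" by (simp add: powr_minus_divide)
        finally show ?thesis .
      qed
      have "(D/2) powr (-\<gamma>) * (pi * R\<^sup>2) = (pi * 2 powr \<gamma>) * (R\<^sup>2 * D powr (-\<gamma>))"
        unfolding eq by (simp add: algebra_simps)
      also have "\<dots> \<le> KT \<gamma> * (R\<^sup>2 * D powr (-\<gamma>))" using KTge(1) by (intro mult_right_mono) auto
      finally show "(D/2) powr (-\<gamma>) * (pi * R\<^sup>2) \<le> KT \<gamma> * R\<^sup>2 * (max (R\<^sup>2) D) powr (-\<gamma>)"
        unfolding mx by (simp add: mult.assoc)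
    qed
    finally show ?thesis unfolding D_def .
  qed
  moreover have "?thesis" if nA: "\<not> R * (2 * norm x + R) \<le> D / 2" and B: "R \<le> norm x / 2"
  proof -
    define w where "w = (t + norm x) / 2"
    have wpos: "w > 0" using t by (simp add: w_def add_pos_nonneg)
    have pw: "ennreal (\<bar>t\<^sup>2 - (norm z)\<^sup>2\<bar> powr (-\<gamma>)) * indicator (ball x R) z
              \<le> ennreal (w powr (-\<gamma>)) * (ennreal (\<bar>t - norm z\<bar> powr (-\<gamma>)) * indicator (ball x R) z)" for z
    proof (cases "z \<in> ball x R")
      case True
      have "\<bar>norm z - norm x\<bar> \<le> R" using norm_triangle_ineq3[of z x] True
        by (simp add: dist_norm norm_minus_commute)
      then have "norm x - norm z \<le> R" by (auto dest: abs_le_D2)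
      then have "w \<le> t + norm z" using B t unfolding w_def by argo
      then have le: "(t + norm z) powr (-\<gamma>) \<le> w powr (-\<gamma>)" using wpos ga by (intro powr_neg_anti) auto
      have "\<bar>t\<^sup>2 - (norm z)\<^sup>2\<bar> = \<bar>t - norm z\<bar> * (t + norm z)"
        using t by (intro diff_sq_abs) auto
      then have "\<bar>t\<^sup>2 - (norm z)\<^sup>2\<bar> powr (-\<gamma>) = \<bar>t - norm z\<bar> powr (-\<gamma>) * (t + norm z) powr (-\<gamma>)"
        using t by (simp add: powr_mult add_nonneg_nonneg)
      also have "\<dots> \<le> \<bar>t - norm z\<bar> powr (-\<gamma>) * w powr (-\<gamma>)" using le by (intro mult_left_mono) auto
      finally show ?thesis using True by (simp add: ennreal_mult[symmetric] ennreal_leI mult.commute)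
    qed simp
    have "(\<integral>\<^sup>+z. ennreal (\<bar>t\<^sup>2 - (norm z)\<^sup>2\<bar> powr (-\<gamma>)) * indicator (ball x R) z \<partial>lborel)
        \<le> (\<integral>\<^sup>+z. ennreal (w powr (-\<gamma>)) * (ennreal (\<bar>t - norm z\<bar> powr (-\<gamma>)) * indicator (ball x R) z) \<partial>lborel)"
      by (rule nn_integral_mono) (rule pw)
    also have "\<dots> = ennreal (w powr (-\<gamma>)) * (\<integral>\<^sup>+z. ennreal (\<bar>t - norm z\<bar> powr (-\<gamma>)) * indicator (ball x R) z \<partial>lborel)"
      by (rule nn_integral_cmult) measurable
    also have "\<dots> \<le> ennreal (w powr (-\<gamma>)) * ennreal (KJ \<gamma> * R\<^sup>2 * (max R d) powr (-\<gamma>))"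
      unfolding d_def by (intro mult_left_mono J_bound ga R) auto
    also have "\<dots> = ennreal (w powr (-\<gamma>) * (KJ \<gamma> * R\<^sup>2 * (max R d) powr (-\<gamma>)))"
      using KJp by (simp add: ennreal_mult)
    also have "\<dots> \<le> ennreal (KT \<gamma> * R\<^sup>2 * (max (R\<^sup>2) D) powr (-\<gamma>))"
    proof (rule ennreal_leI)
      have mpos: "max R d > 0" using R by auto
      have prod: "max (R\<^sup>2) D \<le> (t + norm x) * max R d"
      proof -
        have "R\<^sup>2 \<le> (t + norm x) * R" using B R t by (simp add: power2_eq_square)
        also have "\<dots> \<le> (t + norm x) * max R d" using t by (intro mult_left_mono) auto
        finally have 1: "R\<^sup>2 \<le> (t + norm x) * max R d" .
        have "D = (t + norm x) * d" unfolding D_def d_def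
          using t diff_sq_abs[of t "norm x"] by (simp add: mult.commute)
        also have "\<dots> \<le> (t + norm x) * max R d" using t by (intro mult_left_mono) auto
        finally show ?thesis using 1 by simp
      qed
      have mxpos: "max (R\<^sup>2) D > 0" using max.strict_coboundedI1[OF R2] by simp
      have "w powr (-\<gamma>) * (max R d) powr (-\<gamma>) = 2 powr \<gamma> * ((t + norm x) * max R d) powr (-\<gamma>)"
      proof -
        have "w powr (-\<gamma>) * (max R d) powr (-\<gamma>) = (w * max R d) powr (-\<gamma>)"
          using wpos mpos by (simp add: powr_mult)
        also have "w * max R d = ((t + norm x) * max R d) / 2" by (simp add: w_def)
        also have "(((t + norm x) * max R d) / 2) powr (-\<gamma>) = ((t + norm x) * max R d) powr (-\<gamma>) / 2 powr (-\<gamma>)"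
          using t mpos by (intro powr_divide)
        also have "\<dots> = 2 powr \<gamma> * ((t + norm x) * max R d) powr (-\<gamma>)" by (simp add: powr_minus_divide)
        finally show ?thesis .
      qed
      moreover have "((t + norm x) * max R d) powr (-\<gamma>) \<le> (max (R\<^sup>2) D) powr (-\<gamma>)"
        using prod mxpos ga by (intro powr_neg_anti) auto
      ultimately have "w powr (-\<gamma>) * (max R d) powr (-\<gamma>) \<le> 2 powr \<gamma> * (max (R\<^sup>2) D) powr (-\<gamma>)" by simp
      then have "KJ \<gamma> * R\<^sup>2 * (w powr (-\<gamma>) * (max R d) powr (-\<gamma>)) \<le> KJ \<gamma> * R\<^sup>2 * (2 powr \<gamma> * (max (R\<^sup>2) D) powr (-\<gamma>))"
        using KJp by (intro mult_left_mono) auto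
      also have "\<dots> = (2 powr \<gamma> * KJ \<gamma>) * (R\<^sup>2 * (max (R\<^sup>2) D) powr (-\<gamma>))" by (simp add: algebra_simps)
      also have "\<dots> \<le> KT \<gamma> * (R\<^sup>2 * (max (R\<^sup>2) D) powr (-\<gamma>))" using KTge(2) by (intro mult_right_mono) auto
      finally show "w powr (-\<gamma>) * (KJ \<gamma> * R\<^sup>2 * (max R d) powr (-\<gamma>)) \<le> KT \<gamma> * R\<^sup>2 * (max (R\<^sup>2) D) powr (-\<gamma>)"
        by (simp add: algebra_simps)
    qed
    finally show ?thesis unfolding D_def .
  qed
  moreover have "?thesis" if nA: "\<not> R * (2 * norm x + R) \<le> D / 2" and C: "\<not> R \<le> norm x / 2"
  proof -
    have "D / 2 < R * (2 * norm x + R)" using nA by simp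
    also have "\<dots> \<le> R * (5 * R)" using C R by (intro mult_left_mono) auto
    finally have D10: "D \<le> 10 * R\<^sup>2" by (simp add: power2_eq_square)
    have "(\<integral>\<^sup>+z. ennreal (\<bar>t\<^sup>2 - (norm z)\<^sup>2\<bar> powr (-\<gamma>)) * indicator (ball x R) z \<partial>lborel)
       \<le> ennreal (pi * R\<^sup>2 * (R\<^sup>2) powr (-\<gamma>) + (2 * pi) * (R\<^sup>2) powr (1-\<gamma>) * 2 powr \<gamma> / (1 - 2 powr (\<gamma>-1)))"
    proof (rule layer_integral)
      show "emeasure lborel (ball x R) \<le> ennreal (pi * R\<^sup>2)" using R by (simp add: emeasure_ball2)
      fix s :: real assume s: "s > 0"
      have "emeasure lborel (ball x R \<inter> {z. \<bar>t\<^sup>2 - (norm z)\<^sup>2\<bar> < s}) \<le> emeasure lborel {z::real^2. \<bar>t\<^sup>2 - (norm z)\<^sup>2\<bar> < s}"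
        by (intro emeasure_mono) auto
      also have "\<dots> \<le> ennreal (2 * pi * s)" by (rule layer_tilde[OF s])
      finally show "emeasure lborel (ball x R \<inter> {z. \<bar>t\<^sup>2 - (norm z)\<^sup>2\<bar> < s}) \<le> ennreal (2 * pi * s)" .
    qed (use R ga in auto)
    also have "\<dots> \<le> ennreal (KT \<gamma> * R\<^sup>2 * (max (R\<^sup>2) D) powr (-\<gamma>))"
    proof (rule ennreal_leI)
      have e1: "(R\<^sup>2) powr (1-\<gamma>) = R\<^sup>2 * (R\<^sup>2) powr (-\<gamma>)"
      proof -
        have "(R\<^sup>2) powr (1-\<gamma>) = (R\<^sup>2) powr (1 + (-\<gamma>))" by simp
        also have "\<dots> = (R\<^sup>2) powr 1 * (R\<^sup>2) powr (-\<gamma>)" by (rule powr_add)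
        also have "(R\<^sup>2) powr 1 = R\<^sup>2" using R2 by simp
        finally show ?thesis .
      qed
      have mxpos: "max (R\<^sup>2) D > 0" using max.strict_coboundedI1[OF R2] by simp
      have e2: "(R\<^sup>2) powr (-\<gamma>) \<le> 10 powr \<gamma> * (max (R\<^sup>2) D) powr (-\<gamma>)"
      proof -
        have "(10 * R\<^sup>2) powr (-\<gamma>) \<le> (max (R\<^sup>2) D) powr (-\<gamma>)"
          using D10 mxpos ga R2 by (intro powr_neg_anti) auto
        then have "10 powr (-\<gamma>) * (R\<^sup>2) powr (-\<gamma>) \<le> (max (R\<^sup>2) D) powr (-\<gamma>)"
          using R2 by (simp add: powr_mult)
        then have "10 powr \<gamma> * (10 powr (-\<gamma>) * (R\<^sup>2) powr (-\<gamma>)) \<le> 10 powr \<gamma> * (max (R\<^sup>2) D) powr (-\<gamma>)"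
          by (intro mult_left_mono) auto
        moreover have "10 powr \<gamma> * (10 powr (-\<gamma>) * (R\<^sup>2) powr (-\<gamma>)) = (R\<^sup>2) powr (-\<gamma>)"
          by (simp add: mult.assoc[symmetric] powr_add[symmetric])
        ultimately show ?thesis by simp
      qed
      have "pi * R\<^sup>2 * (R\<^sup>2) powr (-\<gamma>) + (2 * pi) * (R\<^sup>2) powr (1-\<gamma>) * 2 powr \<gamma> / (1 - 2 powr (\<gamma>-1))
          = (pi + 2 * pi * Qc \<gamma>) * (R\<^sup>2 * (R\<^sup>2) powr (-\<gamma>))"
        unfolding e1 by (simp add: Qc_def algebra_simps)
      also have "\<dots> \<le> (pi + 2 * pi * Qc \<gamma>) * (R\<^sup>2 * (10 powr \<gamma> * (max (R\<^sup>2) D) powr (-\<gamma>)))"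
        using e2 Q R2 by (intro mult_left_mono) auto
      also have "\<dots> = ((pi + 2 * pi * Qc \<gamma>) * 10 powr \<gamma>) * (R\<^sup>2 * (max (R\<^sup>2) D) powr (-\<gamma>))"
        by (simp add: algebra_simps)
      also have "\<dots> \<le> KT \<gamma> * (R\<^sup>2 * (max (R\<^sup>2) D) powr (-\<gamma>))"
        using KTge(3) by (intro mult_right_mono) auto
      finally show "pi * R\<^sup>2 * (R\<^sup>2) powr (-\<gamma>) + (2 * pi) * (R\<^sup>2) powr (1-\<gamma>) * 2 powr \<gamma> / (1 - 2 powr (\<gamma>-1))
          \<le> KT \<gamma> * R\<^sup>2 * (max (R\<^sup>2) D) powr (-\<gamma>)" by (simp add: mult.assoc)
    qed
    finally show ?thesis unfolding D_def .
  qed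
  ultimately show ?thesis by blast
qed


lemma dyadic_up:
  fixes u :: real assumes "1 \<le> u"
  shows "\<exists>k::nat. 2^k \<le> u \<and> u < 2^(Suc k)"
proof -
  obtain n where n: "u < (2::real)^n" using real_arch_pow[of 2 u] by auto
  define m where "m = (LEAST n. u < (2::real)^n)"
  have m1: "u < (2::real)^m" unfolding m_def by (rule LeastI[of _ n]) (use n in simp)
  have m0: "m \<noteq> 0"
  proof
    assume "m = 0" with m1 assms show False by simp
  qed
  then obtain k where k: "m = Suc k" by (cases m) auto
  have "\<not> u < (2::real)^k" using not_less_Least[of k "\<lambda>n. u < (2::real)^n"] k m_def by simp
  then have "2^k \<le> u \<and> u < 2^(Suc k)" using m1 k by auto
  then show ?thesis by blast
qed

lemma jbr_ge: "jbr u \<ge> 1" "jbr u \<ge> \<bar>u\<bar>"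
  unfolding jbr_def by (auto intro: real_le_rsqrt)

lemma nu_majorant:
  fixes y :: "real^2" and N :: real assumes N: "N > 0"
  shows "ennreal (jbr (N * norm y) powr (-4)) \<le> (\<Sum>k. ennreal (16 * (1/16)^k) * indicator (ball 0 (2^k / N)) y)"
proof -
  define u where "u = N * norm y"
  have u0: "u \<ge> 0" using N by (simp add: u_def)
  have jpos: "jbr u > 0" using jbr_ge(1)[of u] by linarith
  show ?thesis
  proof (cases "u < 1")
    case True
    have "jbr u powr (-4) \<le> 1 powr (-4)" using jbr_ge(1)[of u] by (intro powr_mono2') auto
    then have "jbr u powr (-4) \<le> 16 * (1/16)^0" by simp
    moreover have "y \<in> ball 0 (2^0 / N)" using True N by (simp add: u_def field_simps)
    ultimately have "ennreal (jbr u powr (-4)) \<le> ennreal (16 * (1/16)^0) * indicator (ball 0 (2^0 / N)) y"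
      by (simp add: ennreal_leI del: ennreal_numeral)
    also have "\<dots> \<le> (\<Sum>k. ennreal (16 * (1/16)^k) * indicator (ball 0 (2^k / N)) y)"
      by (rule ennreal_le_suminf[where f="\<lambda>k. ennreal (16 * (1/16)^k) * indicator (ball 0 (2^k / N)) y"])
    finally show ?thesis unfolding u_def .
  next
    case False
    then obtain k where k: "2^k \<le> u" "u < 2^(Suc k)" using dyadic_up[of u] by auto
    have "jbr u powr (-4) \<le> (2^k) powr (-4)" using jbr_ge(2)[of u] k u0 by (intro powr_mono2') auto
    also have "(2^k) powr (-4::real) = 16 * (1/16::real)^(Suc k)"
    proof -
      have "((2::real)^k) powr (-4::real) = inverse (((2::real)^k) powr 4)" by (rule powr_minus)
      also have "((2::real)^k) powr 4 = ((2::real)^k)^4" by (subst powr_numeral) auto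
      also have "((2::real)^k)^4 = (2^4)^k" by (simp only: power_mult[symmetric] mult.commute)
      also have "inverse (((2::real)^4)^k) = (1/16::real)^k"
        by (simp add: power_one_over inverse_eq_divide)
      finally show ?thesis by simp
    qed
    finally have le: "jbr u powr (-4) \<le> 16 * (1/16)^(Suc k)" .
    have "y \<in> ball 0 (2^(Suc k) / N)" using k N by (simp add: u_def field_simps del: power_Suc)
    then have "ennreal (jbr u powr (-4)) \<le> ennreal (16 * (1/16)^(Suc k)) * indicator (ball 0 (2^(Suc k) / N)) y"
      using le by (simp add: ennreal_leI del: power_Suc)
    also have "\<dots> \<le> (\<Sum>k. ennreal (16 * (1/16)^k) * indicator (ball 0 (2^k / N)) y)"
      by (rule ennreal_le_suminf[where f="\<lambda>k. ennreal (16 * (1/16)^k) * indicator (ball 0 (2^k / N)) y"])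
    finally show ?thesis unfolding u_def .
  qed
qed

lemma nn_integral_reflect:
  fixes f :: "real^2 \<Rightarrow> ennreal" and x :: "real^2"
  assumes f: "f \<in> borel_measurable borel"
  shows "(\<integral>\<^sup>+y. f (x - y) \<partial>lborel) = (\<integral>\<^sup>+z. f z \<partial>lborel)"
proof -
  have L: "(lborel :: (real^2) measure) = density (distr lborel borel (\<lambda>y. x + (-1) *\<^sub>R y)) (\<lambda>_. \<bar>-1::real\<bar>^DIM(real^2))"
    by (rule lborel_affine) simp
  have "(\<integral>\<^sup>+z. f z \<partial>lborel) = (\<integral>\<^sup>+z. f z \<partial>(density (distr lborel borel (\<lambda>y. x + (-1) *\<^sub>R y)) (\<lambda>_. \<bar>-1::real\<bar>^DIM(real^2))))"
    by (subst L[symmetric]) rule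
  also have "\<dots> = (\<integral>\<^sup>+z. f z \<partial>(distr lborel borel (\<lambda>y. x + (-1) *\<^sub>R y)))"
    by (simp add: density_1)
  also have "\<dots> = (\<integral>\<^sup>+y. f (x + (-1) *\<^sub>R y) \<partial>lborel)"
    using f by (intro nn_integral_distr) auto
  finally show ?thesis by simp
qed


lemma geom_eq: "(1/16::real)^k * (2^k / N)\<^sup>2 = (1/4)^k / N\<^sup>2"
proof -
  have a: "((2::real)^k)\<^sup>2 = 4^k" by (simp add: power_mult[symmetric] power2_eq_square power_mult_distrib[symmetric])
  have b: "(1/16::real)^k * 4^k = (1/4)^k" by (simp add: power_mult_distrib[symmetric])
  have "(1/16::real)^k * (2^k / N)\<^sup>2 = ((1/16::real)^k * 4^k) / N\<^sup>2"
    by (simp add: power_divide a)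
  then show ?thesis using b by simp
qed

lemma conv_generic:
  fixes h \<nu> :: "real^2 \<Rightarrow> real" and x :: "real^2" and N M K \<Phi> :: real
  assumes hm: "h \<in> borel_measurable borel" and h0: "\<And>z. h z \<ge> 0"
    and N: "N > 0" and M: "M \<ge> 0" and K: "K \<ge> 0" and Phi: "\<Phi> \<ge> 0"
    and bnd: "\<And>y. \<bar>\<nu> y\<bar> \<le> M * N\<^sup>2 * jbr (N * norm y) powr (-4)"
    and ballb: "\<And>R. R \<ge> 1/N \<Longrightarrow> (\<integral>\<^sup>+z. ennreal (h z) * indicator (ball x R) z \<partial>lborel) \<le> ennreal (K * R\<^sup>2 * \<Phi>)"
  shows "(\<integral>\<^sup>+y. ennreal (h (x - y) * \<bar>\<nu> y\<bar>) \<partial>lborel) \<le> ennreal (22 * K * M * \<Phi>)"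
proof -
  define c where "c k = 16 * (1/16::real)^k" for k :: nat
  define Rk where "Rk k = 2^k / N" for k :: nat
  define g where "g k y = ennreal (c k) * (ennreal (h (x - y)) * indicator (ball 0 (Rk k)) y)" for k y
  have MN: "M * N\<^sup>2 \<ge> 0" using M by simp
  have hxm: "(\<lambda>y. h (x - y)) \<in> borel_measurable borel" using hm by measurable
  have gm: "g k \<in> borel_measurable borel" for k unfolding g_def using hxm by measurable
  have pw: "ennreal (h (x - y) * \<bar>\<nu> y\<bar>) \<le> ennreal (M * N\<^sup>2) * (\<Sum>k. g k y)" for y
  proof -
    have "h (x - y) * \<bar>\<nu> y\<bar> \<le> h (x - y) * (M * N\<^sup>2 * jbr (N * norm y) powr (-4))"
      using bnd h0 by (intro mult_left_mono) auto
    then have "ennreal (h (x - y) * \<bar>\<nu> y\<bar>) \<le> ennreal (M * N\<^sup>2) * (ennreal (h (x - y)) * ennreal (jbr (N * norm y) powr (-4)))"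
      using MN h0 by (simp add: ennreal_leI ennreal_mult[symmetric] mult_ac)
    also have "\<dots> \<le> ennreal (M * N\<^sup>2) * (ennreal (h (x - y)) * (\<Sum>k. ennreal (c k) * indicator (ball 0 (Rk k)) y))"
      unfolding c_def Rk_def by (intro mult_left_mono nu_majorant N) auto
    also have "ennreal (h (x - y)) * (\<Sum>k. ennreal (c k) * indicator (ball 0 (Rk k)) y) = (\<Sum>k. g k y)"
      unfolding g_def ennreal_suminf_cmult[symmetric] by (simp add: mult_ac)
    finally show ?thesis .
  qed
  have refl: "(\<integral>\<^sup>+y. ennreal (h (x - y)) * indicator (ball 0 R) y \<partial>lborel) = (\<integral>\<^sup>+z. ennreal (h z) * indicator (ball x R) z \<partial>lborel)" for R
  proof -
    have "(\<integral>\<^sup>+y. ennreal (h (x - y)) * indicator (ball 0 R) y \<partial>lborel) = (\<integral>\<^sup>+y. ennreal (h (x - y)) * indicator (ball x R) (x - y) \<partial>lborel)"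
      by (intro nn_integral_cong) (simp add: indicator_def dist_norm)
    also have "\<dots> = (\<integral>\<^sup>+z. ennreal (h z) * indicator (ball x R) z \<partial>lborel)"
      by (rule nn_integral_reflect[where f="\<lambda>z. ennreal (h z) * indicator (ball x R) z"]) (use hm in measurable)
    finally show ?thesis .
  qed
  have "(\<integral>\<^sup>+y. ennreal (h (x - y) * \<bar>\<nu> y\<bar>) \<partial>lborel) \<le> (\<integral>\<^sup>+y. ennreal (M * N\<^sup>2) * (\<Sum>k. g k y) \<partial>lborel)"
    by (intro nn_integral_mono pw)
  also have "\<dots> = ennreal (M * N\<^sup>2) * (\<integral>\<^sup>+y. (\<Sum>k. g k y) \<partial>lborel)"
    using gm by (intro nn_integral_cmult) auto
  also have "(\<integral>\<^sup>+y. (\<Sum>k. g k y) \<partial>lborel) = (\<Sum>k. \<integral>\<^sup>+y. g k y \<partial>lborel)"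
    by (rule nn_integral_suminf) (use gm in auto)
  also have "\<dots> \<le> (\<Sum>k. ennreal ((16 * K * \<Phi> / N\<^sup>2) * (1/4)^k))"
  proof (rule suminf_le)
    fix k
    have "(\<integral>\<^sup>+y. g k y \<partial>lborel) = ennreal (c k) * (\<integral>\<^sup>+y. ennreal (h (x - y)) * indicator (ball 0 (Rk k)) y \<partial>lborel)"
    proof -
      have "(\<lambda>y. ennreal (h (x - y)) * indicator (ball 0 (Rk k)) y) \<in> borel_measurable borel"
        using hxm by measurable
      then show ?thesis unfolding g_def by (intro nn_integral_cmult) simp
    qed
    also have "\<dots> = ennreal (c k) * (\<integral>\<^sup>+z. ennreal (h z) * indicator (ball x (Rk k)) z \<partial>lborel)"
      by (simp add: refl)
    also have "\<dots> \<le> ennreal (c k) * ennreal (K * (Rk k)\<^sup>2 * \<Phi>)"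
    proof (intro mult_left_mono ballb)
      have "(1::real) \<le> 2^k" by simp
      then show "1/N \<le> Rk k" using N unfolding Rk_def by (intro divide_right_mono) auto
    qed auto
    also have "\<dots> = ennreal (c k * (K * (Rk k)\<^sup>2 * \<Phi>))"
      using K Phi by (simp add: ennreal_mult c_def)
    also have "c k * (K * (Rk k)\<^sup>2 * \<Phi>) = (16 * K * \<Phi> / N\<^sup>2) * (1/4)^k"
    proof -
      have "c k * (K * (Rk k)\<^sup>2 * \<Phi>) = 16 * K * \<Phi> * ((1/16::real)^k * (2^k / N)\<^sup>2)"
        unfolding c_def Rk_def by (simp add: mult_ac)
      also have "\<dots> = (16 * K * \<Phi> / N\<^sup>2) * (1/4)^k" by (simp add: geom_eq)
      finally show ?thesis .
    qed
    finally show "(\<integral>\<^sup>+y. g k y \<partial>lborel) \<le> ennreal ((16 * K * \<Phi> / N\<^sup>2) * (1/4)^k)" .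
  qed (auto intro: summableI)
  also have "(\<Sum>k. ennreal ((16 * K * \<Phi> / N\<^sup>2) * (1/4)^k)) = ennreal ((16 * K * \<Phi> / N\<^sup>2) * (4/3))"
  proof -
    have s: "summable (\<lambda>k. (16 * K * \<Phi> / N\<^sup>2) * (1/4::real)^k)" by (intro summable_mult summable_geometric) auto
    have "(\<Sum>k. ennreal ((16 * K * \<Phi> / N\<^sup>2) * (1/4)^k)) = ennreal (\<Sum>k. (16 * K * \<Phi> / N\<^sup>2) * (1/4::real)^k)"
      using s K Phi by (intro suminf_ennreal2) auto
    also have "(\<Sum>k. (16 * K * \<Phi> / N\<^sup>2) * (1/4::real)^k) = (16 * K * \<Phi> / N\<^sup>2) * (\<Sum>k. (1/4::real)^k)"
      by (rule suminf_mult) (rule summable_geometric, simp)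
    also have "(\<Sum>k. (1/4::real)^k) = 4/3" by (subst suminf_geometric) auto
    finally show ?thesis .
  qed
  also have "ennreal (M * N\<^sup>2) * ennreal ((16 * K * \<Phi> / N\<^sup>2) * (4/3)) = ennreal (64/3 * K * M * \<Phi>)"
    using MN K Phi N by (simp add: ennreal_mult[symmetric] field_simps)
  also have "\<dots> \<le> ennreal (22 * K * M * \<Phi>)"
    using K M Phi by (intro ennreal_leI mult_right_mono) auto
  finally show ?thesis by (metis mult_left_mono zero_le)
qed


lemma Hprof_eq: "Hprof t \<gamma> r = \<bar>t - r\<bar> powr (-\<gamma>)"
  by (simp add: Hprof_def)

lemma Htprof_eq: "Htprof t \<gamma> r = \<bar>t\<^sup>2 - r\<^sup>2\<bar> powr (-\<gamma>)"
  by (simp add: Htprof_def)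

definition Phi1 :: "nat \<Rightarrow> real \<Rightarrow> real \<Rightarrow> real \<Rightarrow> real" where
  "Phi1 N t \<gamma> r = (if r = t then real N powr \<gamma> else min (real N powr \<gamma>) (\<bar>t - r\<bar> powr (- \<gamma>)))"

definition Phi2 :: "nat \<Rightarrow> real \<Rightarrow> real \<Rightarrow> real \<Rightarrow> real" where
  "Phi2 N t \<gamma> r = (if r = t then real N powr (2 * \<gamma>) else min (real N powr (2 * \<gamma>)) (\<bar>t\<^sup>2 - r\<^sup>2\<bar> powr (- \<gamma>)))"

lemma Phi1_nonneg: "Phi1 N t \<gamma> r \<ge> 0" by (simp add: Phi1_def)
lemma Phi2_nonneg: "Phi2 N t \<gamma> r \<ge> 0" by (simp add: Phi2_def)

lemma R2_H:
  fixes \<nu> :: "real^2 \<Rightarrow> real" and x :: "real^2"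
  assumes ga: "0 < \<gamma>" "\<gamma> < 1" and t: "t > 0" and N: "N \<ge> 1" and M: "M \<ge> 0"
    and bnd: "\<And>y. \<bar>\<nu> y\<bar> \<le> M * real N ^ 2 * jbr (real N * norm y) powr (-4)"
  shows "(\<integral>\<^sup>+y. ennreal (\<bar>t - norm (x - y)\<bar> powr (-\<gamma>) * \<bar>\<nu> y\<bar>) \<partial>lborel)
           \<le> ennreal (22 * KJ \<gamma> * M * Phi1 N t \<gamma> (norm x))"
proof (rule conv_generic[where h="\<lambda>z. \<bar>t - norm z\<bar> powr (-\<gamma>)"])
  show "(\<lambda>z. \<bar>t - norm z\<bar> powr (-\<gamma>)) \<in> borel_measurable borel" by measurable
  show "real N > 0" using N by simp
  show "KJ \<gamma> \<ge> 0" using KJ_pos[OF ga] by simp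
  show "Phi1 N t \<gamma> (norm x) \<ge> 0" by (rule Phi1_nonneg)
  fix R :: real assume R: "R \<ge> 1 / real N"
  have Rp: "R > 0" using less_le_trans[OF _ R] N by simp
  have "(\<integral>\<^sup>+z. ennreal (\<bar>t - norm z\<bar> powr (-\<gamma>)) * indicator (ball x R) z \<partial>lborel)
        \<le> ennreal (KJ \<gamma> * R\<^sup>2 * (max R \<bar>t - norm x\<bar>) powr (-\<gamma>))"
    by (rule J_bound[OF ga Rp])
  also have "\<dots> \<le> ennreal (KJ \<gamma> * R\<^sup>2 * Phi1 N t \<gamma> (norm x))"
  proof (intro ennreal_leI mult_left_mono)
    have mpos: "max R \<bar>t - norm x\<bar> > 0" using Rp by auto
    have a: "(max R \<bar>t - norm x\<bar>) powr (-\<gamma>) \<le> real N powr \<gamma>"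
    proof -
      have "(max R \<bar>t - norm x\<bar>) powr (-\<gamma>) \<le> (1 / real N) powr (-\<gamma>)"
        using R N ga by (intro powr_neg_anti) auto
      also have "(1 / real N) powr (-\<gamma>) = real N powr \<gamma>" using N
        by (simp add: powr_divide powr_minus_divide)
      finally show ?thesis .
    qed
    have b: "(max R \<bar>t - norm x\<bar>) powr (-\<gamma>) \<le> \<bar>t - norm x\<bar> powr (-\<gamma>)" if "norm x \<noteq> t"
      using that ga by (intro powr_neg_anti) auto
    show "(max R \<bar>t - norm x\<bar>) powr (-\<gamma>) \<le> Phi1 N t \<gamma> (norm x)"
      unfolding Phi1_def using a b by auto
  qed (use KJ_pos[OF ga] in auto)
  finally show "(\<integral>\<^sup>+z. ennreal (\<bar>t - norm z\<bar> powr (-\<gamma>)) * indicator (ball x R) z \<partial>lborel)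
        \<le> ennreal (KJ \<gamma> * R\<^sup>2 * Phi1 N t \<gamma> (norm x))" .
qed (use M bnd in auto)

lemma R2_T:
  fixes \<nu> :: "real^2 \<Rightarrow> real" and x :: "real^2"
  assumes ga: "0 < \<gamma>" "\<gamma> < 1" and t: "t > 0" and N: "N \<ge> 1" and M: "M \<ge> 0"
    and bnd: "\<And>y. \<bar>\<nu> y\<bar> \<le> M * real N ^ 2 * jbr (real N * norm y) powr (-4)"
  shows "(\<integral>\<^sup>+y. ennreal (\<bar>t\<^sup>2 - (norm (x - y))\<^sup>2\<bar> powr (-\<gamma>) * \<bar>\<nu> y\<bar>) \<partial>lborel)
           \<le> ennreal (22 * KT \<gamma> * M * Phi2 N t \<gamma> (norm x))"
proof (rule conv_generic[where h="\<lambda>z. \<bar>t\<^sup>2 - (norm z)\<^sup>2\<bar> powr (-\<gamma>)"])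
  show "(\<lambda>z. \<bar>t\<^sup>2 - (norm z)\<^sup>2\<bar> powr (-\<gamma>)) \<in> borel_measurable borel" by measurable
  show "real N > 0" using N by simp
  have KTp: "KT \<gamma> \<ge> 0" using KJ_pos[OF ga] Qc_pos[OF ga] by (simp add: KT_def)
  show "KT \<gamma> \<ge> 0" by (rule KTp)
  show "Phi2 N t \<gamma> (norm x) \<ge> 0" by (rule Phi2_nonneg)
  fix R :: real assume R: "R \<ge> 1 / real N"
  have Rp: "R > 0" using less_le_trans[OF _ R] N by simp
  have "(\<integral>\<^sup>+z. ennreal (\<bar>t\<^sup>2 - (norm z)\<^sup>2\<bar> powr (-\<gamma>)) * indicator (ball x R) z \<partial>lborel)
        \<le> ennreal (KT \<gamma> * R\<^sup>2 * (max (R\<^sup>2) \<bar>t\<^sup>2 - (norm x)\<^sup>2\<bar>) powr (-\<gamma>))"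
    by (rule Jt_bound[OF ga Rp t])
  also have "\<dots> \<le> ennreal (KT \<gamma> * R\<^sup>2 * Phi2 N t \<gamma> (norm x))"
  proof (intro ennreal_leI mult_left_mono)
    have R2: "R\<^sup>2 \<ge> (1 / real N)\<^sup>2" using R N by (intro power_mono) auto
    have a: "(max (R\<^sup>2) \<bar>t\<^sup>2 - (norm x)\<^sup>2\<bar>) powr (-\<gamma>) \<le> real N powr (2 * \<gamma>)"
    proof -
      have "(max (R\<^sup>2) \<bar>t\<^sup>2 - (norm x)\<^sup>2\<bar>) powr (-\<gamma>) \<le> ((1 / real N)\<^sup>2) powr (-\<gamma>)"
        using R2 N ga by (intro powr_neg_anti) auto
      also have "((1 / real N)\<^sup>2) powr (-\<gamma>) = real N powr (2 * \<gamma>)"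
      proof -
        have "((1 / real N) powr 2) powr (-\<gamma>) = (1 / real N) powr (2 * (-\<gamma>))" by (rule powr_powr)
        moreover have "(1 / real N) powr 2 = (1 / real N)\<^sup>2" by (rule powr_numeral) simp
        ultimately have "((1 / real N)\<^sup>2) powr (-\<gamma>) = (1 / real N) powr (- (2 * \<gamma>))" by simp
        also have "\<dots> = real N powr (2 * \<gamma>)" using N by (simp add: powr_divide powr_minus_divide)
        finally show ?thesis .
      qed
      finally show ?thesis .
    qed
    have b: "(max (R\<^sup>2) \<bar>t\<^sup>2 - (norm x)\<^sup>2\<bar>) powr (-\<gamma>) \<le> \<bar>t\<^sup>2 - (norm x)\<^sup>2\<bar> powr (-\<gamma>)" if "norm x \<noteq> t"
    proof -
      have "\<bar>t\<^sup>2 - (norm x)\<^sup>2\<bar> > 0"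
      proof -
        have "t\<^sup>2 \<noteq> (norm x)\<^sup>2" using that t by (metis norm_ge_zero power2_eq_iff_nonneg less_imp_le)
        then show ?thesis by simp
      qed
      then show ?thesis using ga by (intro powr_neg_anti) auto
    qed
    show "(max (R\<^sup>2) \<bar>t\<^sup>2 - (norm x)\<^sup>2\<bar>) powr (-\<gamma>) \<le> Phi2 N t \<gamma> (norm x)"
      unfolding Phi2_def using a b by auto
  qed (use KTp in auto)
  finally show "(\<integral>\<^sup>+z. ennreal (\<bar>t\<^sup>2 - (norm z)\<^sup>2\<bar> powr (-\<gamma>)) * indicator (ball x R) z \<partial>lborel)
        \<le> ennreal (KT \<gamma> * R\<^sup>2 * Phi2 N t \<gamma> (norm x))" .
qed (use M bnd in auto)


lemma int_bound:
  fixes f :: "'a \<Rightarrow> real"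
  assumes f: "f \<in> borel_measurable M" and b: "(\<integral>\<^sup>+x. ennreal (\<bar>f x\<bar>) \<partial>M) \<le> ennreal r" and r: "r \<ge> 0"
  shows "integrable M f \<and> \<bar>integral\<^sup>L M f\<bar> \<le> r"
proof
  have fin: "(\<integral>\<^sup>+x. ennreal (norm (f x)) \<partial>M) < \<infinity>" using b by (simp add: le_less_trans)
  show int: "integrable M f" by (rule integrableI_bounded[OF f fin])
  have "ennreal (norm (integral\<^sup>L M f)) \<le> (\<integral>\<^sup>+x. ennreal (norm (f x)) \<partial>M)"
    by (rule integral_norm_bound_ennreal[OF int])
  also have "\<dots> \<le> ennreal r" using b by simp
  finally show "\<bar>integral\<^sup>L M f\<bar> \<le> r" using r by (simp add: ennreal_le_iff)
qed

lemma jbr_ge1: "jbr u \<ge> 1" by (rule jbr_ge(1))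

lemma logfac_ge1: "logfac N t r \<ge> 1" unfolding logfac_def by (rule jbr_ge1)

lemma bound1_eq: "bound1 N t \<gamma> r = Phi1 N t \<gamma> r * logfac N t r"
  by (simp add: bound1_def Phi1_def)

lemma bound2_eq: "bound2 N t \<gamma> r = Phi2 N t \<gamma> r * logfac N t r"
  by (simp add: bound2_def Phi2_def)

lemma Phi1_le_bound1: "K \<ge> 0 \<Longrightarrow> K * Phi1 N t \<gamma> r \<le> K * bound1 N t \<gamma> r"
  unfolding bound1_eq using Phi1_nonneg[of N t \<gamma> r] logfac_ge1[of N t r]
  by (intro mult_left_mono) (auto simp: mult_le_cancel_left1)

lemma Phi2_le_bound2: "K \<ge> 0 \<Longrightarrow> K * Phi2 N t \<gamma> r \<le> K * bound2 N t \<gamma> r"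
  unfolding bound2_eq using Phi2_nonneg[of N t \<gamma> r] logfac_ge1[of N t r]
  by (intro mult_left_mono) (auto simp: mult_le_cancel_left1)

lemma decay4:
  assumes "\<forall>A\<ge>1. \<forall>y. \<bar>\<nu> y\<bar> \<le> C A * real N ^ 2 * jbr (real N * nrm y) powr (- A)"
  shows "\<bar>\<nu> y\<bar> \<le> max (C 4) 0 * real N ^ 2 * jbr (real N * nrm y) powr (-4)"
proof -
  have "\<bar>\<nu> y\<bar> \<le> C 4 * real N ^ 2 * jbr (real N * nrm y) powr (- 4)" using assms by force
  also have "\<dots> \<le> max (C 4) 0 * real N ^ 2 * jbr (real N * nrm y) powr (-4)"
    by (intro mult_right_mono) auto
  finally show ?thesis .
qed

lemma R2_part:
  fixes \<gamma> :: real and C :: "real \<Rightarrow> real"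
  assumes "0 < \<gamma>" and "\<gamma> \<le> 1/2"
  shows
   "(\<exists>K. \<forall>(N::nat) (\<nu>::real^2 \<Rightarrow> real) t x.
        N \<ge> 1 \<longrightarrow> \<nu> \<in> borel_measurable lborel \<longrightarrow>
        (\<forall>A\<ge>1. \<forall>y. \<bar>\<nu> y\<bar> \<le> C A * real N ^ 2 * jbr (real N * norm y) powr (- A)) \<longrightarrow>
        0 < t \<longrightarrow> t \<le> 1 \<longrightarrow> norm x < 10 \<longrightarrow>
          integrable lborel (\<lambda>y. Hprof t \<gamma> (norm (x - y)) * \<nu> y)
        \<and> integrable lborel (\<lambda>y. Htprof t \<gamma> (norm (x - y)) * \<nu> y)
        \<and> \<bar>convR2 (\<lambda>z. Hprof t \<gamma> (norm z)) \<nu> x\<bar> \<le> K * bound1 N t \<gamma> (norm x)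
        \<and> \<bar>convR2 (\<lambda>z. Htprof t \<gamma> (norm z)) \<nu> x\<bar> \<le> K * bound2 N t \<gamma> (norm x))"
proof -
  have ga: "0 < \<gamma>" "\<gamma> < 1" using assms by auto
  define M where "M = max (C 4) 0"
  define K where "K = 22 * (KJ \<gamma> + KT \<gamma>) * M"
  have M0: "M \<ge> 0" by (simp add: M_def)
  have KJp: "KJ \<gamma> > 0" using KJ_pos[OF ga] .
  have KTp: "KT \<gamma> \<ge> 0" using KJ_pos[OF ga] Qc_pos[OF ga] by (simp add: KT_def)
  have K1: "22 * KJ \<gamma> * M \<le> K" unfolding K_def using KTp M0 by (intro mult_right_mono) auto
  have K2: "22 * KT \<gamma> * M \<le> K" unfolding K_def using KJp M0 by (intro mult_right_mono) auto
  show ?thesis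
  proof (intro exI[of _ K] allI impI)
    fix N :: nat and \<nu> :: "real^2 \<Rightarrow> real" and t :: real and x :: "real^2"
    assume N: "N \<ge> 1" and nu: "\<nu> \<in> borel_measurable lborel"
      and dec: "\<forall>A\<ge>1. \<forall>y. \<bar>\<nu> y\<bar> \<le> C A * real N ^ 2 * jbr (real N * norm y) powr (- A)"
      and t: "0 < t" "t \<le> 1" "norm x < 10"
    have bnd: "\<bar>\<nu> y\<bar> \<le> M * real N ^ 2 * jbr (real N * norm y) powr (-4)" for y
      unfolding M_def by (rule decay4[OF dec])
    have nub: "\<nu> \<in> borel_measurable borel" using nu by simp
    have A: "integrable lborel (\<lambda>y. Hprof t \<gamma> (norm (x - y)) * \<nu> y) \<and>
             \<bar>integral\<^sup>L lborel (\<lambda>y. Hprof t \<gamma> (norm (x - y)) * \<nu> y)\<bar> \<le> 22 * KJ \<gamma> * M * Phi1 N t \<gamma> (norm x)"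
    proof (rule int_bound)
      show "(\<lambda>y. Hprof t \<gamma> (norm (x - y)) * \<nu> y) \<in> borel_measurable lborel"
        unfolding Hprof_eq using nub by measurable
      have "(\<integral>\<^sup>+y. ennreal \<bar>Hprof t \<gamma> (norm (x - y)) * \<nu> y\<bar> \<partial>lborel)
          = (\<integral>\<^sup>+y. ennreal (\<bar>t - norm (x - y)\<bar> powr (-\<gamma>) * \<bar>\<nu> y\<bar>) \<partial>lborel)"
        by (simp add: Hprof_eq abs_mult)
      also have "\<dots> \<le> ennreal (22 * KJ \<gamma> * M * Phi1 N t \<gamma> (norm x))"
        by (rule R2_H[OF ga t(1) N M0 bnd])
      finally show "(\<integral>\<^sup>+y. ennreal \<bar>Hprof t \<gamma> (norm (x - y)) * \<nu> y\<bar> \<partial>lborel) \<le> ennreal (22 * KJ \<gamma> * M * Phi1 N t \<gamma> (norm x))" .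
      show "22 * KJ \<gamma> * M * Phi1 N t \<gamma> (norm x) \<ge> 0" using KJp M0 Phi1_nonneg by simp
    qed
    have B: "integrable lborel (\<lambda>y. Htprof t \<gamma> (norm (x - y)) * \<nu> y) \<and>
             \<bar>integral\<^sup>L lborel (\<lambda>y. Htprof t \<gamma> (norm (x - y)) * \<nu> y)\<bar> \<le> 22 * KT \<gamma> * M * Phi2 N t \<gamma> (norm x)"
    proof (rule int_bound)
      show "(\<lambda>y. Htprof t \<gamma> (norm (x - y)) * \<nu> y) \<in> borel_measurable lborel"
        unfolding Htprof_eq using nub by measurable
      have "(\<integral>\<^sup>+y. ennreal \<bar>Htprof t \<gamma> (norm (x - y)) * \<nu> y\<bar> \<partial>lborel)
          = (\<integral>\<^sup>+y. ennreal (\<bar>t\<^sup>2 - (norm (x - y))\<^sup>2\<bar> powr (-\<gamma>) * \<bar>\<nu> y\<bar>) \<partial>lborel)"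
        by (simp add: Htprof_eq abs_mult)
      also have "\<dots> \<le> ennreal (22 * KT \<gamma> * M * Phi2 N t \<gamma> (norm x))"
        by (rule R2_T[OF ga t(1) N M0 bnd])
      finally show "(\<integral>\<^sup>+y. ennreal \<bar>Htprof t \<gamma> (norm (x - y)) * \<nu> y\<bar> \<partial>lborel) \<le> ennreal (22 * KT \<gamma> * M * Phi2 N t \<gamma> (norm x))" .
      show "22 * KT \<gamma> * M * Phi2 N t \<gamma> (norm x) \<ge> 0" using KTp M0 Phi2_nonneg by simp
    qed
    have c1: "\<bar>convR2 (\<lambda>z. Hprof t \<gamma> (norm z)) \<nu> x\<bar> \<le> K * bound1 N t \<gamma> (norm x)"
    proof -
      have "\<bar>convR2 (\<lambda>z. Hprof t \<gamma> (norm z)) \<nu> x\<bar> \<le> 22 * KJ \<gamma> * M * Phi1 N t \<gamma> (norm x)"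
        using A by (simp add: convR2_def)
      also have "\<dots> \<le> K * Phi1 N t \<gamma> (norm x)" using K1 Phi1_nonneg by (intro mult_right_mono) auto
      also have "\<dots> \<le> K * bound1 N t \<gamma> (norm x)" using K1 KJp M0
        by (intro Phi1_le_bound1) (smt (verit) mult_nonneg_nonneg)
      finally show ?thesis .
    qed
    have c2: "\<bar>convR2 (\<lambda>z. Htprof t \<gamma> (norm z)) \<nu> x\<bar> \<le> K * bound2 N t \<gamma> (norm x)"
    proof -
      have "\<bar>convR2 (\<lambda>z. Htprof t \<gamma> (norm z)) \<nu> x\<bar> \<le> 22 * KT \<gamma> * M * Phi2 N t \<gamma> (norm x)"
        using B by (simp add: convR2_def)
      also have "\<dots> \<le> K * Phi2 N t \<gamma> (norm x)" using K2 Phi2_nonneg by (intro mult_right_mono) auto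
      also have "\<dots> \<le> K * bound2 N t \<gamma> (norm x)" using K1 KJp M0
        by (intro Phi2_le_bound2) (smt (verit) mult_nonneg_nonneg)
      finally show ?thesis .
    qed
    show "integrable lborel (\<lambda>y. Hprof t \<gamma> (norm (x - y)) * \<nu> y)
        \<and> integrable lborel (\<lambda>y. Htprof t \<gamma> (norm (x - y)) * \<nu> y)
        \<and> \<bar>convR2 (\<lambda>z. Hprof t \<gamma> (norm z)) \<nu> x\<bar> \<le> K * bound1 N t \<gamma> (norm x)
        \<and> \<bar>convR2 (\<lambda>z. Htprof t \<gamma> (norm z)) \<nu> x\<bar> \<le> K * bound2 N t \<gamma> (norm x)"
      using A B c1 c2 by blast
  qed
qed


lemma infdist_geI:
  assumes "A \<noteq> {}" "\<And>a. a \<in> A \<Longrightarrow> d \<le> dist x a"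
  shows "d \<le> infdist x A"
  using assms by (simp add: infdist_def) (rule cINF_greatest, auto)

lemma lattice_mem: "v \<in> lattice2pi \<longleftrightarrow> (\<exists>m1 m2::int. v$1 = 2 * pi * real_of_int m1 \<and> v$2 = 2 * pi * real_of_int m2)"
  by (simp add: lattice2pi_def forall_2)

lemma lattice_0: "0 \<in> lattice2pi" by (simp add: lattice_mem)

lemma lattice_add: "v \<in> lattice2pi \<Longrightarrow> w \<in> lattice2pi \<Longrightarrow> v + w \<in> lattice2pi"
proof -
  assume "v \<in> lattice2pi" "w \<in> lattice2pi"
  then obtain a b c d :: int where "v$1 = 2 * pi * real_of_int a" "v$2 = 2 * pi * real_of_int b" "w$1 = 2 * pi * real_of_int c" "w$2 = 2 * pi * real_of_int d"
    by (auto simp: lattice_mem)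
  then show ?thesis unfolding lattice_mem
    by (intro exI[of _ "a + c"] exI[of _ "b + d"]) (simp add: algebra_simps)
qed

lemma lattice_uminus: "v \<in> lattice2pi \<Longrightarrow> - v \<in> lattice2pi"
proof -
  assume "v \<in> lattice2pi"
  then obtain a b :: int where "v$1 = 2 * pi * real_of_int a" "v$2 = 2 * pi * real_of_int b" by (auto simp: lattice_mem)
  then show ?thesis unfolding lattice_mem
    by (intro exI[of _ "- a"] exI[of _ "- b"]) simp
qed

lemma tnorm_shift_le: "v \<in> lattice2pi \<Longrightarrow> tnorm z \<le> tnorm (z + v)"
proof -
  assume v: "v \<in> lattice2pi"
  show ?thesis unfolding tnorm_def
  proof (rule infdist_geI)
    show "lattice2pi \<noteq> {}" using lattice_0 by auto
    fix a assume a: "a \<in> lattice2pi"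
    have "a - v \<in> lattice2pi" using lattice_add[OF a lattice_uminus[OF v]] by simp
    then have "infdist z lattice2pi \<le> dist z (a - v)" by (rule infdist_le)
    also have "dist z (a - v) = dist (z + v) a" by (simp add: dist_norm algebra_simps)
    finally show "infdist z lattice2pi \<le> dist (z + v) a" .
  qed
qed

lemma tnorm_shift: "v \<in> lattice2pi \<Longrightarrow> tnorm (z + v) = tnorm z"
proof -
  assume v: "v \<in> lattice2pi"
  have "tnorm z \<le> tnorm (z + v)" by (rule tnorm_shift_le[OF v])
  moreover have "tnorm (z + v) \<le> tnorm ((z + v) + (- v))" by (rule tnorm_shift_le[OF lattice_uminus[OF v]])
  ultimately show ?thesis by simp
qed

lemma norm_mono2:
  fixes a b :: "real^2"
  assumes "\<bar>a$1\<bar> \<le> \<bar>b$1\<bar>" "\<bar>a$2\<bar> \<le> \<bar>b$2\<bar>"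
  shows "norm a \<le> norm b"
proof -
  have "(a$1)\<^sup>2 \<le> (b$1)\<^sup>2" "(a$2)\<^sup>2 \<le> (b$2)\<^sup>2" using assms by (simp_all add: abs_le_square_iff)
  then show ?thesis unfolding norm_vec2' by (intro real_sqrt_le_mono) simp
qed

lemma int_abs_ge1: "(m::int) \<noteq> 0 \<Longrightarrow> 1 \<le> \<bar>real_of_int m\<bar>"
  by linarith

lemma coord_far:
  fixes y :: real and m :: int assumes "\<bar>y\<bar> \<le> pi"
  shows "\<bar>y\<bar> \<le> \<bar>y - 2 * pi * m\<bar>"
proof (cases "m = 0")
  case True then show ?thesis by simp
next
  case False
  have "2 * pi * 1 \<le> 2 * pi * \<bar>real_of_int m\<bar>" using int_abs_ge1[OF False] by (intro mult_left_mono) auto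
  then have "2 * pi \<le> \<bar>2 * pi * m\<bar>" by (simp add: abs_mult)
  moreover have "\<bar>2 * pi * m\<bar> - \<bar>y\<bar> \<le> \<bar>y - 2 * pi * m\<bar>"
    using abs_triangle_ineq2[of "2 * pi * m" y] by (simp add: abs_minus_commute)
  ultimately show ?thesis using assms by argo
qed

lemma tnorm_cell:
  fixes y :: "real^2" assumes "\<bar>y$1\<bar> \<le> pi" "\<bar>y$2\<bar> \<le> pi"
  shows "tnorm y = norm y"
proof (rule antisym)
  show "tnorm y \<le> norm y" unfolding tnorm_def using infdist_le[OF lattice_0, of y] by simp
  show "norm y \<le> tnorm y" unfolding tnorm_def
  proof (rule infdist_geI)
    show "lattice2pi \<noteq> {}" using lattice_0 by auto
    fix a assume "a \<in> lattice2pi"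
    then obtain m1 m2 :: int where m: "a$1 = 2 * pi * real_of_int m1" "a$2 = 2 * pi * real_of_int m2" by (auto simp: lattice_mem)
    show "norm y \<le> dist y a" unfolding dist_norm
      by (rule norm_mono2) (use m assms coord_far in auto)
  qed
qed

lemma tnorm_nonneg: "tnorm z \<ge> 0" unfolding tnorm_def by (rule infdist_nonneg)

lemma tnorm_cont: "continuous_on UNIV tnorm"
  unfolding tnorm_def by (intro continuous_intros)

lemma tnorm_meas[measurable]: "tnorm \<in> borel_measurable borel"
  using tnorm_cont by (rule borel_measurable_continuous_onI)


definition L9 :: "(real^2) set" where
  "L9 = (\<lambda>p. vector [2 * pi * fst p, 2 * pi * snd p]) ` ({-1, 0, 1::real} \<times> {-1, 0, 1::real})"

lemma cell_mem: "y \<in> torus_cell \<longleftrightarrow> (-pi \<le> y$1 \<and> y$1 < pi \<and> -pi \<le> y$2 \<and> y$2 < pi)"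
  by (auto simp: torus_cell_def forall_2)

lemma L9_finite: "finite L9" by (simp add: L9_def)

lemma L9_card: "card L9 \<le> 9"
proof -
  have "card L9 \<le> card ({-1, 0, 1::real} \<times> {-1, 0, 1::real})" unfolding L9_def by (rule card_image_le) simp
  also have "\<dots> = 9" by (simp add: card_cartesian_product)
  finally show ?thesis .
qed

lemma L9_0: "0 \<in> L9"
proof -
  have "(0::real^2) = vector [2 * pi * fst (0::real, 0::real), 2 * pi * snd (0::real, 0::real)]"
    by (simp add: vec_eq_iff forall_2)
  then show ?thesis unfolding L9_def by blast
qed

lemma L9_lattice: "L9 \<subseteq> lattice2pi"
proof
  fix k assume "k \<in> L9"
  then obtain p where p: "p \<in> {-1, 0, 1::real} \<times> {-1, 0, 1::real}" "k = vector [2 * pi * fst p, 2 * pi * snd p]"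
    unfolding L9_def by (rule imageE) blast
  define a where "a = fst p"
  define b where "b = snd p"
  have ab: "a \<in> {-1, 0, 1}" "b \<in> {-1, 0, 1}" "k = vector [2 * pi * a, 2 * pi * b]"
    using p by (auto simp: a_def b_def mem_Times_iff)
  have ia: "\<exists>m::int. a = real_of_int m" using ab(1) by (auto intro: exI[of _ "-1"] exI[of _ 0] exI[of _ 1])
  have ib: "\<exists>m::int. b = real_of_int m" using ab(2) by (auto intro: exI[of _ "-1"] exI[of _ 0] exI[of _ 1])
  show "k \<in> lattice2pi" unfolding lattice_mem using ia ib ab(3) by auto
qed

definition clampi :: "int \<Rightarrow> int" where "clampi m = max (-1) (min 1 m)"

lemma clamp_le:
  fixes y :: real assumes "\<bar>y\<bar> \<le> 2 * pi"
  shows "\<bar>y - 2 * pi * real_of_int (clampi m)\<bar> \<le> \<bar>y - 2 * pi * real_of_int m\<bar>"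
proof -
  consider "m \<ge> 1" | "m \<le> -1" | "m = 0" by linarith
  then show ?thesis
  proof cases
    case 1
    then have c: "clampi m = 1" by (simp add: clampi_def)
    have "real_of_int m \<ge> 1" using 1 by simp
    then have h: "2 * pi * 1 \<le> 2 * pi * real_of_int m" by (intro mult_left_mono) auto
    have y1: "y \<le> 2 * pi" using assms abs_le_D1 by blast
    have e1: "\<bar>y - 2 * pi * real_of_int (clampi m)\<bar> = 2 * pi - y" using y1 c by simp
    have "y - 2 * pi * real_of_int m \<le> 0" using y1 h by argo
    then have e2: "\<bar>y - 2 * pi * real_of_int m\<bar> = 2 * pi * real_of_int m - y" by simp
    show ?thesis unfolding e1 e2 using h by simp
  next
    case 2
    then have c: "clampi m = -1" by (simp add: clampi_def)
    have "real_of_int m \<le> -1" using 2 by simp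
    then have h: "2 * pi * real_of_int m \<le> 2 * pi * (-1)" by (intro mult_left_mono) auto
    have y1: "- y \<le> 2 * pi" using assms abs_le_D2 by blast
    have e1: "\<bar>y - 2 * pi * real_of_int (clampi m)\<bar> = y + 2 * pi" using y1 c by simp
    have "y - 2 * pi * real_of_int m \<ge> 0" using y1 h by argo
    then have e2: "\<bar>y - 2 * pi * real_of_int m\<bar> = y - 2 * pi * real_of_int m" by simp
    show ?thesis unfolding e1 e2 using h by simp
  next
    case 3 then show ?thesis by (simp add: clampi_def)
  qed
qed

lemma clampi_range: "real_of_int (clampi m) \<in> {-1, 0, 1}"
  by (auto simp: clampi_def max_def min_def)

lemma tnorm_L9:
  fixes w :: "real^2" assumes w: "\<bar>w$1\<bar> \<le> 2 * pi" "\<bar>w$2\<bar> \<le> 2 * pi"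
  shows "\<exists>k\<in>L9. tnorm w = norm (w - k)"
proof -
  have ne: "L9 \<noteq> {}" using L9_0 by auto
  have le: "infdist w L9 \<le> infdist w lattice2pi"
  proof (rule infdist_geI)
    show "lattice2pi \<noteq> {}" using lattice_0 by auto
    fix a assume "a \<in> lattice2pi"
    then obtain m1 m2 :: int where m: "a$1 = 2 * pi * real_of_int m1" "a$2 = 2 * pi * real_of_int m2"
      by (auto simp: lattice_mem)
    define k :: "real^2" where "k = vector [2 * pi * real_of_int (clampi m1), 2 * pi * real_of_int (clampi m2)]"
    have kL: "k \<in> L9" unfolding L9_def k_def
      using clampi_range[of m1] clampi_range[of m2]
      by (intro image_eqI[where x="(real_of_int (clampi m1), real_of_int (clampi m2))"]) auto
    have "dist w k \<le> dist w a" unfolding dist_norm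
      by (rule norm_mono2) (use m w clamp_le in \<open>auto simp: k_def\<close>)
    then show "infdist w L9 \<le> dist w a" by (rule infdist_le2[OF kL])
  qed
  have ge: "infdist w lattice2pi \<le> infdist w L9" by (rule infdist_mono[OF L9_lattice ne])
  obtain k where k: "k \<in> L9" "infdist w L9 = dist w k"
    using infdist_attains_inf[OF finite_imp_closed[OF L9_finite] ne] by blast
  have "tnorm w = dist w k" unfolding tnorm_def using le ge k by simp
  then show ?thesis using k(1) by (auto simp: dist_norm)
qed

lemma cell_far:
  fixes x0 k :: "real^2" assumes x0: "x0 \<in> torus_cell" and k: "k \<in> L9" "k \<noteq> 0"
  shows "pi \<le> norm (x0 - k)"
proof -
  obtain p where p: "p \<in> {-1, 0, 1::real} \<times> {-1, 0, 1::real}" "k = vector [2 * pi * fst p, 2 * pi * snd p]"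
    using k(1) unfolding L9_def by (rule imageE) blast
  define a where "a = fst p"
  define b where "b = snd p"
  have ab: "a \<in> {-1, 0, 1}" "b \<in> {-1, 0, 1}" "k = vector [2 * pi * a, 2 * pi * b]"
    using p by (auto simp: a_def b_def mem_Times_iff)
  have c: "-pi \<le> x0$1" "x0$1 < pi" "-pi \<le> x0$2" "x0$2 < pi" using x0 by (auto simp: cell_mem)
  have "a \<noteq> 0 \<or> b \<noteq> 0" using k(2) ab(3) by (auto simp: vec_eq_iff forall_2)
  then show ?thesis
  proof
    assume "a \<noteq> 0"
    then have "pi \<le> \<bar>(x0 - k)$1\<bar>" using ab(1) c ab(3) by auto
    also have "\<dots> \<le> norm (x0 - k)" by (rule component_le_norm_cart)
    finally show ?thesis .
  next
    assume "b \<noteq> 0"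
    then have "pi \<le> \<bar>(x0 - k)$2\<bar>" using ab(2) c ab(3) by auto
    also have "\<dots> \<le> norm (x0 - k)" by (rule component_le_norm_cart)
    finally show ?thesis .
  qed
qed

lemma reduce_cell: "\<exists>v\<in>lattice2pi. x - v \<in> torus_cell"
proof -
  define m1 where "m1 = \<lfloor>(x$1 + pi) / (2 * pi)\<rfloor>"
  define m2 where "m2 = \<lfloor>(x$2 + pi) / (2 * pi)\<rfloor>"
  define v :: "real^2" where "v = vector [2 * pi * real_of_int m1, 2 * pi * real_of_int m2]"
  have vL: "v \<in> lattice2pi" unfolding lattice_mem v_def by auto
  have f: "2 * pi * real_of_int m - pi \<le> y \<and> y < 2 * pi * real_of_int m + pi" if "m = \<lfloor>(y + pi) / (2 * pi)\<rfloor>" for y m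
  proof -
    have "real_of_int m \<le> (y + pi) / (2 * pi)" "(y + pi) / (2 * pi) < real_of_int m + 1"
      using that by linarith+
    then show ?thesis by (simp add: field_simps)
  qed
  have "x - v \<in> torus_cell" unfolding cell_mem v_def using f[OF m1_def] f[OF m2_def] by auto
  then show ?thesis using vL by blast
qed

lemma cell_bound: "x0 \<in> torus_cell \<Longrightarrow> norm x0 \<le> 8"
proof -
  assume "x0 \<in> torus_cell"
  then have c: "\<bar>x0$1\<bar> \<le> pi" "\<bar>x0$2\<bar> \<le> pi" by (auto simp: cell_mem)
  have "norm x0 \<le> \<bar>x0$1\<bar> + \<bar>x0$2\<bar>"
  proof -
    have "(norm x0)\<^sup>2 = (x0$1)\<^sup>2 + (x0$2)\<^sup>2" unfolding norm_vec2' by simp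
    also have "\<dots> \<le> (\<bar>x0$1\<bar> + \<bar>x0$2\<bar>)\<^sup>2" by (simp add: power2_eq_square algebra_simps)
    finally show ?thesis by (rule power2_le_imp_le) simp
  qed
  also have "\<dots> \<le> 8" using c pi_less_4 by argo
  finally show ?thesis .
qed


lemma cell_eq: "torus_cell = {y. -pi \<le> y$1 \<and> y$1 < pi \<and> -pi \<le> y$2 \<and> y$2 < pi}"
  by (auto simp: cell_mem)

lemma cell_borel[measurable]: "torus_cell \<in> sets borel"
  unfolding cell_eq by measurable

lemma Phi1_far:
  assumes ga: "0 < \<gamma>" and t: "t \<le> 1" and r: "pi \<le> r"
  shows "Phi1 N t \<gamma> r \<le> 1"
proof -
  have rt: "r \<noteq> t" using t r pi_gt3 by auto
  have "1 \<le> \<bar>t - r\<bar>" using t r pi_gt3 by argo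
  then have "\<bar>t - r\<bar> powr (-\<gamma>) \<le> 1 powr (-\<gamma>)" using ga by (intro powr_neg_anti) auto
  then show ?thesis using rt by (simp add: Phi1_def)
qed

lemma Phi2_far:
  assumes ga: "0 < \<gamma>" and t: "0 < t" "t \<le> 1" and r: "pi \<le> r"
  shows "Phi2 N t \<gamma> r \<le> 1"
proof -
  have rt: "r \<noteq> t" using t r pi_gt3 by auto
  have "3 * 3 \<le> r * r" using r pi_gt3 by (intro mult_mono) auto
  moreover have "t * t \<le> 1 * 1" using t by (intro mult_mono) auto
  ultimately have "1 \<le> \<bar>t\<^sup>2 - r\<^sup>2\<bar>" by (simp add: power2_eq_square)
  then have "\<bar>t\<^sup>2 - r\<^sup>2\<bar> powr (-\<gamma>) \<le> 1 powr (-\<gamma>)" using ga by (intro powr_neg_anti) auto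
  then show ?thesis using rt by (simp add: Phi2_def)
qed

lemma abs_sub_le: "0 \<le> (A::real) \<Longrightarrow> A \<le> c \<Longrightarrow> 0 \<le> B \<Longrightarrow> B \<le> c \<Longrightarrow> \<bar>A - B\<bar> \<le> c"
  by argo

lemma powr_low:
  fixes a :: real assumes a: "0 < a" "a \<le> B" "1 \<le> B" and ga: "0 < \<gamma>" "\<gamma> < 1"
  shows "1 / B \<le> a powr (-\<gamma>)"
proof -
  have "B powr (-1) \<le> B powr (-\<gamma>)" using a ga by (intro powr_mono) auto
  also have "B powr (-\<gamma>) \<le> a powr (-\<gamma>)" using a ga by (intro powr_neg_anti) auto
  finally show ?thesis using a by (simp add: powr_minus_divide)
qed

lemma Npowr_ge1: "1 \<le> N \<Longrightarrow> 0 \<le> e \<Longrightarrow> 1 \<le> real N powr e"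
  by (simp add: ge_one_powr_ge_zero)

lemma Phi1_low:
  assumes ga: "0 < \<gamma>" "\<gamma> < 1" and t: "0 < t" "t \<le> 1" and r: "0 \<le> r" "r \<le> 8" and N: "N \<ge> 1"
  shows "1 / 65 \<le> Phi1 N t \<gamma> r"
proof (cases "r = t")
  case True then show ?thesis using Npowr_ge1[OF N, of \<gamma>] ga by (simp add: Phi1_def)
next
  case False
  have "1 / 9 \<le> \<bar>t - r\<bar> powr (-\<gamma>)" using False t r ga by (intro powr_low) auto
  moreover have "1 \<le> real N powr \<gamma>" using Npowr_ge1[OF N, of \<gamma>] ga by simp
  ultimately show ?thesis using False by (simp add: Phi1_def)
qed

lemma Phi2_low:
  assumes ga: "0 < \<gamma>" "\<gamma> < 1" and t: "0 < t" "t \<le> 1" and r: "0 \<le> r" "r \<le> 8" and N: "N \<ge> 1"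
  shows "1 / 65 \<le> Phi2 N t \<gamma> r"
proof (cases "r = t")
  case True then show ?thesis using Npowr_ge1[OF N, of "2 * \<gamma>"] ga by (simp add: Phi2_def)
next
  case False
  have ne: "t\<^sup>2 \<noteq> r\<^sup>2" using False t r by (metis less_imp_le power2_eq_iff_nonneg)
  have "t * t \<le> 1 * 1" using t by (intro mult_mono) auto
  moreover have "r * r \<le> 8 * 8" using r by (intro mult_mono) auto
  ultimately have "\<bar>t\<^sup>2 - r\<^sup>2\<bar> \<le> 64" unfolding power2_eq_square
    by (intro abs_sub_le) auto
  then have "1 / 64 \<le> \<bar>t\<^sup>2 - r\<^sup>2\<bar> powr (-\<gamma>)" using ne ga by (intro powr_low) auto
  moreover have "1 \<le> real N powr (2 * \<gamma>)" using Npowr_ge1[OF N, of "2 * \<gamma>"] ga by simp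
  ultimately show ?thesis using False by (simp add: Phi2_def)
qed

lemma Phi1_cmp:
  assumes ga: "0 < \<gamma>" "\<gamma> < 1" and t: "0 < t" "t \<le> 1" and N: "N \<ge> 1"
    and x0: "x0 \<in> torus_cell" and k: "k \<in> L9"
  shows "Phi1 N t \<gamma> (norm (x0 - k)) \<le> 65 * Phi1 N t \<gamma> (norm x0)"
proof (cases "k = 0")
  case True then show ?thesis using Phi1_nonneg[of N t \<gamma> "norm x0"] by simp
next
  case False
  have "Phi1 N t \<gamma> (norm (x0 - k)) \<le> 1" using Phi1_far[OF ga(1) t(2) cell_far[OF x0 k False]] .
  also have "1 \<le> 65 * Phi1 N t \<gamma> (norm x0)"
    using Phi1_low[OF ga t norm_ge_zero cell_bound[OF x0] N] by simp
  finally show ?thesis .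
qed

lemma Phi2_cmp:
  assumes ga: "0 < \<gamma>" "\<gamma> < 1" and t: "0 < t" "t \<le> 1" and N: "N \<ge> 1"
    and x0: "x0 \<in> torus_cell" and k: "k \<in> L9"
  shows "Phi2 N t \<gamma> (norm (x0 - k)) \<le> 65 * Phi2 N t \<gamma> (norm x0)"
proof (cases "k = 0")
  case True then show ?thesis using Phi2_nonneg[of N t \<gamma> "norm x0"] by simp
next
  case False
  have "Phi2 N t \<gamma> (norm (x0 - k)) \<le> 1" using Phi2_far[OF ga(1) t cell_far[OF x0 k False]] .
  also have "1 \<le> 65 * Phi2 N t \<gamma> (norm x0)"
    using Phi2_low[OF ga t norm_ge_zero cell_bound[OF x0] N] by simp
  finally show ?thesis .
qed


lemma T_generic:
  fixes P :: "real \<Rightarrow> real" and \<Phi> :: "real \<Rightarrow> real" and \<nu> :: "real^2 \<Rightarrow> real" and x :: "real^2"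
  assumes Pm: "P \<in> borel_measurable borel" and P0: "\<And>r. P r \<ge> 0"
    and nu: "\<nu> \<in> borel_measurable borel"
    and bnd: "\<And>y. \<bar>\<nu> y\<bar> \<le> M * real N ^ 2 * jbr (real N * tnorm y) powr (-4)"
    and M: "M \<ge> 0" and Kc: "Kc \<ge> 0" and Phi0: "\<And>r. \<Phi> r \<ge> 0"
    and R2: "\<And>(\<mu>::real^2\<Rightarrow>real) z. (\<And>y. \<bar>\<mu> y\<bar> \<le> M * real N ^ 2 * jbr (real N * norm y) powr (-4)) \<Longrightarrow>
              (\<integral>\<^sup>+y. ennreal (P (norm (z - y)) * \<bar>\<mu> y\<bar>) \<partial>lborel) \<le> ennreal (Kc * \<Phi> (norm z))"
    and cmp: "\<And>x0 k. x0 \<in> torus_cell \<Longrightarrow> k \<in> L9 \<Longrightarrow> \<Phi> (norm (x0 - k)) \<le> 65 * \<Phi> (norm x0)"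
  shows "(\<integral>\<^sup>+y. ennreal \<bar>indicator torus_cell y * (P (tnorm (x - y)) * \<nu> y)\<bar> \<partial>lborel)
           \<le> ennreal (9 * 65 * Kc * \<Phi> (tnorm x))"
proof -
  obtain v where vL: "v \<in> lattice2pi" and x0c: "x - v \<in> torus_cell" using reduce_cell[of x] by blast
  define x0 where "x0 = x - v"
  have x0: "x0 \<in> torus_cell" using x0c by (simp add: x0_def)
  have x0b: "\<bar>x0$1\<bar> \<le> pi" "\<bar>x0$2\<bar> \<le> pi" using x0 by (auto simp: cell_mem)
  have tx: "tnorm x = norm x0"
  proof -
    have "tnorm x = tnorm (x0 + v)" by (simp add: x0_def)
    also have "\<dots> = tnorm x0" by (rule tnorm_shift[OF vL])
    also have "\<dots> = norm x0" by (rule tnorm_cell[OF x0b])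
    finally show ?thesis .
  qed
  have txy: "tnorm (x - y) = tnorm (x0 - y)" for y
  proof -
    have "x - y = (x0 - y) + v" by (simp add: x0_def)
    then have "tnorm (x - y) = tnorm ((x0 - y) + v)" by (rule arg_cong)
    also have "\<dots> = tnorm (x0 - y)" by (rule tnorm_shift[OF vL])
    finally show ?thesis .
  qed
  define nt where "nt y = indicator torus_cell y * \<nu> y" for y
  have ntm: "nt \<in> borel_measurable borel" unfolding nt_def using nu by measurable
  have bnd': "\<bar>nt y\<bar> \<le> M * real N ^ 2 * jbr (real N * norm y) powr (-4)" for y
  proof (cases "y \<in> torus_cell")
    case True
    have "\<bar>y$1\<bar> \<le> pi" "\<bar>y$2\<bar> \<le> pi" using True by (auto simp: cell_mem)
    then have "tnorm y = norm y" by (rule tnorm_cell)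
    then show ?thesis using bnd[of y] True by (simp add: nt_def)
  next
    case False then show ?thesis using M by (simp add: nt_def)
  qed
  define g where "g k y = ennreal (P (norm ((x0 - k) - y)) * \<bar>nt y\<bar>)" for k y
  have gm: "g k \<in> borel_measurable borel" for k unfolding g_def using Pm ntm by measurable
  have pw: "ennreal \<bar>indicator torus_cell y * (P (tnorm (x - y)) * \<nu> y)\<bar> \<le> (\<Sum>k\<in>L9. g k y)" for y
  proof (cases "y \<in> torus_cell")
    case False then show ?thesis by simp
  next
    case True
    have yb: "-pi \<le> y$1" "y$1 < pi" "-pi \<le> y$2" "y$2 < pi" using True by (auto simp: cell_mem)
    have x0b': "-pi \<le> x0$1" "x0$1 < pi" "-pi \<le> x0$2" "x0$2 < pi" using x0 by (auto simp: cell_mem)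
    have wb: "\<bar>(x0 - y)$1\<bar> \<le> 2 * pi" "\<bar>(x0 - y)$2\<bar> \<le> 2 * pi" using yb x0b' by auto
    obtain k where k: "k \<in> L9" "tnorm (x0 - y) = norm ((x0 - y) - k)" using tnorm_L9[OF wb] by blast
    have "ennreal \<bar>indicator torus_cell y * (P (tnorm (x - y)) * \<nu> y)\<bar> = g k y"
      using True P0 k(2) by (simp add: g_def nt_def txy abs_mult algebra_simps)
    also have "\<dots> \<le> (\<Sum>k\<in>L9. g k y)" by (rule member_le_sum[OF k(1)]) (auto simp: L9_finite)
    finally show ?thesis .
  qed
  have "(\<integral>\<^sup>+y. ennreal \<bar>indicator torus_cell y * (P (tnorm (x - y)) * \<nu> y)\<bar> \<partial>lborel)
      \<le> (\<integral>\<^sup>+y. (\<Sum>k\<in>L9. g k y) \<partial>lborel)"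
    by (intro nn_integral_mono pw)
  also have "\<dots> = (\<Sum>k\<in>L9. \<integral>\<^sup>+y. g k y \<partial>lborel)"
    by (rule nn_integral_sum) (use gm in auto)
  also have "\<dots> \<le> (\<Sum>k\<in>L9. ennreal (Kc * (65 * \<Phi> (norm x0))))"
  proof (rule sum_mono)
    fix k assume k: "k \<in> L9"
    have "(\<integral>\<^sup>+y. g k y \<partial>lborel) \<le> ennreal (Kc * \<Phi> (norm (x0 - k)))"
      unfolding g_def by (rule R2[OF bnd'])
    also have "\<dots> \<le> ennreal (Kc * (65 * \<Phi> (norm x0)))"
      using cmp[OF x0 k] Kc by (intro ennreal_leI mult_left_mono) auto
    finally show "(\<integral>\<^sup>+y. g k y \<partial>lborel) \<le> ennreal (Kc * (65 * \<Phi> (norm x0)))" .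
  qed
  also have "\<dots> = of_nat (card L9) * ennreal (Kc * (65 * \<Phi> (norm x0)))" by simp
  also have "\<dots> \<le> of_nat 9 * ennreal (Kc * (65 * \<Phi> (norm x0)))"
    using L9_card by (intro mult_right_mono) auto
  also have "\<dots> = ennreal (9 * (Kc * (65 * \<Phi> (norm x0))))"
    by (subst ennreal_mult') auto
  also have "9 * (Kc * (65 * \<Phi> (norm x0))) = 9 * 65 * Kc * \<Phi> (tnorm x)"
    by (simp add: tx)
  finally show ?thesis .
qed


lemma T_part:
  fixes \<gamma> :: real and C :: "real \<Rightarrow> real"
  assumes "0 < \<gamma>" and "\<gamma> \<le> 1/2"
  shows
   "(\<exists>K. \<forall>(N::nat) (\<nu>::real^2 \<Rightarrow> real) t x.
        N \<ge> 1 \<longrightarrow> \<nu> \<in> borel_measurable lborel \<longrightarrow>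
        (\<forall>y k. k \<in> lattice2pi \<longrightarrow> \<nu> (y + k) = \<nu> y) \<longrightarrow>
        (\<forall>A\<ge>1. \<forall>y. \<bar>\<nu> y\<bar> \<le> C A * real N ^ 2 * jbr (real N * tnorm y) powr (- A)) \<longrightarrow>
        0 < t \<longrightarrow> t \<le> 1 \<longrightarrow>
          set_integrable lborel torus_cell (\<lambda>y. Hprof t \<gamma> (tnorm (x - y)) * \<nu> y)
        \<and> set_integrable lborel torus_cell (\<lambda>y. Htprof t \<gamma> (tnorm (x - y)) * \<nu> y)
        \<and> \<bar>convT2 (\<lambda>z. Hprof t \<gamma> (tnorm z)) \<nu> x\<bar> \<le> K * bound1 N t \<gamma> (tnorm x)
        \<and> \<bar>convT2 (\<lambda>z. Htprof t \<gamma> (tnorm z)) \<nu> x\<bar> \<le> K * bound2 N t \<gamma> (tnorm x))"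
proof -
  have ga: "0 < \<gamma>" "\<gamma> < 1" using assms by auto
  define M where "M = max (C 4) 0"
  define K where "K = 9 * 65 * 22 * (KJ \<gamma> + KT \<gamma>) * M"
  have M0: "M \<ge> 0" by (simp add: M_def)
  have KJp: "KJ \<gamma> > 0" using KJ_pos[OF ga] .
  have KTp: "KT \<gamma> \<ge> 0" using KJ_pos[OF ga] Qc_pos[OF ga] by (simp add: KT_def)
  have K1: "9 * 65 * (22 * KJ \<gamma> * M) \<le> K"
  proof -
    have "9 * 65 * (22 * KJ \<gamma> * M) = (9 * 65 * 22 * KJ \<gamma>) * M" by (simp add: mult_ac)
    also have "\<dots> \<le> (9 * 65 * 22 * (KJ \<gamma> + KT \<gamma>)) * M" using KTp M0 by (intro mult_right_mono) auto
    finally show ?thesis unfolding K_def .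
  qed
  have K2: "9 * 65 * (22 * KT \<gamma> * M) \<le> K"
  proof -
    have "9 * 65 * (22 * KT \<gamma> * M) = (9 * 65 * 22 * KT \<gamma>) * M" by (simp add: mult_ac)
    also have "\<dots> \<le> (9 * 65 * 22 * (KJ \<gamma> + KT \<gamma>)) * M" using KJp M0 by (intro mult_right_mono) auto
    finally show ?thesis unfolding K_def .
  qed
  have K0: "K \<ge> 0" unfolding K_def using KTp KJp M0 by auto
  show ?thesis
  proof (intro exI[of _ K] allI impI)
    fix N :: nat and \<nu> :: "real^2 \<Rightarrow> real" and t :: real and x :: "real^2"
    assume N: "N \<ge> 1" and nu: "\<nu> \<in> borel_measurable lborel"
      and per: "\<forall>y k. k \<in> lattice2pi \<longrightarrow> \<nu> (y + k) = \<nu> y"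
      and dec: "\<forall>A\<ge>1. \<forall>y. \<bar>\<nu> y\<bar> \<le> C A * real N ^ 2 * jbr (real N * tnorm y) powr (- A)"
      and t: "0 < t" "t \<le> 1"
    have bnd: "\<bar>\<nu> y\<bar> \<le> M * real N ^ 2 * jbr (real N * tnorm y) powr (-4)" for y
      unfolding M_def by (rule decay4[OF dec])
    have nub: "\<nu> \<in> borel_measurable borel" using nu by simp
    have A: "integrable lborel (\<lambda>y. indicator torus_cell y *\<^sub>R (Hprof t \<gamma> (tnorm (x - y)) * \<nu> y)) \<and>
             \<bar>integral\<^sup>L lborel (\<lambda>y. indicator torus_cell y *\<^sub>R (Hprof t \<gamma> (tnorm (x - y)) * \<nu> y))\<bar>
               \<le> 9 * 65 * (22 * KJ \<gamma> * M) * Phi1 N t \<gamma> (tnorm x)"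
    proof (rule int_bound)
      show "(\<lambda>y. indicator torus_cell y *\<^sub>R (Hprof t \<gamma> (tnorm (x - y)) * \<nu> y)) \<in> borel_measurable lborel"
        unfolding Hprof_eq using nub by measurable
      have "(\<integral>\<^sup>+y. ennreal \<bar>indicator torus_cell y *\<^sub>R (Hprof t \<gamma> (tnorm (x - y)) * \<nu> y)\<bar> \<partial>lborel)
          = (\<integral>\<^sup>+y. ennreal \<bar>indicator torus_cell y * ((\<lambda>r. \<bar>t - r\<bar> powr (-\<gamma>)) (tnorm (x - y)) * \<nu> y)\<bar> \<partial>lborel)"
        by (simp add: Hprof_eq)
      also have "\<dots> \<le> ennreal (9 * 65 * (22 * KJ \<gamma> * M) * Phi1 N t \<gamma> (tnorm x))"
      proof (rule T_generic[where M=M and N=N])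
        show "(\<lambda>r. \<bar>t - r\<bar> powr (-\<gamma>)) \<in> borel_measurable borel" by measurable
        fix \<mu> :: "real^2 \<Rightarrow> real" and z :: "real^2"
        assume "\<And>y. \<bar>\<mu> y\<bar> \<le> M * real N ^ 2 * jbr (real N * norm y) powr (-4)"
        then show "(\<integral>\<^sup>+y. ennreal ((\<lambda>r. \<bar>t - r\<bar> powr (-\<gamma>)) (norm (z - y)) * \<bar>\<mu> y\<bar>) \<partial>lborel)
                   \<le> ennreal (22 * KJ \<gamma> * M * Phi1 N t \<gamma> (norm z))"
          using R2_H[OF ga t(1) N M0] by simp
      next
        fix x0 k assume "x0 \<in> torus_cell" "k \<in> L9"
        then show "Phi1 N t \<gamma> (norm (x0 - k)) \<le> 65 * Phi1 N t \<gamma> (norm x0)"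
          by (rule Phi1_cmp[OF ga t N])
      qed (use nub bnd M0 KJp Phi1_nonneg in auto)
      finally show "(\<integral>\<^sup>+y. ennreal \<bar>indicator torus_cell y *\<^sub>R (Hprof t \<gamma> (tnorm (x - y)) * \<nu> y)\<bar> \<partial>lborel)
          \<le> ennreal (9 * 65 * (22 * KJ \<gamma> * M) * Phi1 N t \<gamma> (tnorm x))" .
      show "9 * 65 * (22 * KJ \<gamma> * M) * Phi1 N t \<gamma> (tnorm x) \<ge> 0" using KJp M0 Phi1_nonneg by simp
    qed
    have B: "integrable lborel (\<lambda>y. indicator torus_cell y *\<^sub>R (Htprof t \<gamma> (tnorm (x - y)) * \<nu> y)) \<and>
             \<bar>integral\<^sup>L lborel (\<lambda>y. indicator torus_cell y *\<^sub>R (Htprof t \<gamma> (tnorm (x - y)) * \<nu> y))\<bar>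
               \<le> 9 * 65 * (22 * KT \<gamma> * M) * Phi2 N t \<gamma> (tnorm x)"
    proof (rule int_bound)
      show "(\<lambda>y. indicator torus_cell y *\<^sub>R (Htprof t \<gamma> (tnorm (x - y)) * \<nu> y)) \<in> borel_measurable lborel"
        unfolding Htprof_eq using nub by measurable
      have "(\<integral>\<^sup>+y. ennreal \<bar>indicator torus_cell y *\<^sub>R (Htprof t \<gamma> (tnorm (x - y)) * \<nu> y)\<bar> \<partial>lborel)
          = (\<integral>\<^sup>+y. ennreal \<bar>indicator torus_cell y * ((\<lambda>r. \<bar>t\<^sup>2 - r\<^sup>2\<bar> powr (-\<gamma>)) (tnorm (x - y)) * \<nu> y)\<bar> \<partial>lborel)"
        by (simp add: Htprof_eq)
      also have "\<dots> \<le> ennreal (9 * 65 * (22 * KT \<gamma> * M) * Phi2 N t \<gamma> (tnorm x))"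
      proof (rule T_generic[where M=M and N=N])
        show "(\<lambda>r. \<bar>t\<^sup>2 - r\<^sup>2\<bar> powr (-\<gamma>)) \<in> borel_measurable borel" by measurable
        fix \<mu> :: "real^2 \<Rightarrow> real" and z :: "real^2"
        assume "\<And>y. \<bar>\<mu> y\<bar> \<le> M * real N ^ 2 * jbr (real N * norm y) powr (-4)"
        then show "(\<integral>\<^sup>+y. ennreal ((\<lambda>r. \<bar>t\<^sup>2 - r\<^sup>2\<bar> powr (-\<gamma>)) (norm (z - y)) * \<bar>\<mu> y\<bar>) \<partial>lborel)
                   \<le> ennreal (22 * KT \<gamma> * M * Phi2 N t \<gamma> (norm z))"
          using R2_T[OF ga t(1) N M0] by simp
      next
        fix x0 k assume "x0 \<in> torus_cell" "k \<in> L9"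
        then show "Phi2 N t \<gamma> (norm (x0 - k)) \<le> 65 * Phi2 N t \<gamma> (norm x0)"
          by (rule Phi2_cmp[OF ga t N])
      qed (use nub bnd M0 KTp Phi2_nonneg in auto)
      finally show "(\<integral>\<^sup>+y. ennreal \<bar>indicator torus_cell y *\<^sub>R (Htprof t \<gamma> (tnorm (x - y)) * \<nu> y)\<bar> \<partial>lborel)
          \<le> ennreal (9 * 65 * (22 * KT \<gamma> * M) * Phi2 N t \<gamma> (tnorm x))" .
      show "9 * 65 * (22 * KT \<gamma> * M) * Phi2 N t \<gamma> (tnorm x) \<ge> 0" using KTp M0 Phi2_nonneg by simp
    qed
    have c1: "\<bar>convT2 (\<lambda>z. Hprof t \<gamma> (tnorm z)) \<nu> x\<bar> \<le> K * bound1 N t \<gamma> (tnorm x)"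
    proof -
      have "\<bar>convT2 (\<lambda>z. Hprof t \<gamma> (tnorm z)) \<nu> x\<bar> \<le> 9 * 65 * (22 * KJ \<gamma> * M) * Phi1 N t \<gamma> (tnorm x)"
        using A by (simp add: convT2_def set_lebesgue_integral_def)
      also have "\<dots> \<le> K * Phi1 N t \<gamma> (tnorm x)" using K1 Phi1_nonneg by (intro mult_right_mono) auto
      also have "\<dots> \<le> K * bound1 N t \<gamma> (tnorm x)" using K0 by (rule Phi1_le_bound1)
      finally show ?thesis .
    qed
    have c2: "\<bar>convT2 (\<lambda>z. Htprof t \<gamma> (tnorm z)) \<nu> x\<bar> \<le> K * bound2 N t \<gamma> (tnorm x)"
    proof -
      have "\<bar>convT2 (\<lambda>z. Htprof t \<gamma> (tnorm z)) \<nu> x\<bar> \<le> 9 * 65 * (22 * KT \<gamma> * M) * Phi2 N t \<gamma> (tnorm x)"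
        using B by (simp add: convT2_def set_lebesgue_integral_def)
      also have "\<dots> \<le> K * Phi2 N t \<gamma> (tnorm x)" using K2 Phi2_nonneg by (intro mult_right_mono) auto
      also have "\<dots> \<le> K * bound2 N t \<gamma> (tnorm x)" using K0 by (rule Phi2_le_bound2)
      finally show ?thesis .
    qed
    show "set_integrable lborel torus_cell (\<lambda>y. Hprof t \<gamma> (tnorm (x - y)) * \<nu> y)
        \<and> set_integrable lborel torus_cell (\<lambda>y. Htprof t \<gamma> (tnorm (x - y)) * \<nu> y)
        \<and> \<bar>convT2 (\<lambda>z. Hprof t \<gamma> (tnorm z)) \<nu> x\<bar> \<le> K * bound1 N t \<gamma> (tnorm x)
        \<and> \<bar>convT2 (\<lambda>z. Htprof t \<gamma> (tnorm z)) \<nu> x\<bar> \<le> K * bound2 N t \<gamma> (tnorm x)"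
      using A B c1 c2 unfolding set_integrable_def by blast
  qed
qed

theorem lemma3p3:
  fixes \<gamma> :: real and C :: "real \<Rightarrow> real"
  assumes "0 < \<gamma>" and "\<gamma> \<le> 1/2"
  shows
   "(\<exists>K. \<forall>(N::nat) (\<nu>::real^2 \<Rightarrow> real) t x.
        N \<ge> 1 \<longrightarrow> \<nu> \<in> borel_measurable lborel \<longrightarrow>
        (\<forall>A\<ge>1. \<forall>y. \<bar>\<nu> y\<bar> \<le> C A * real N ^ 2 * jbr (real N * norm y) powr (- A)) \<longrightarrow>
        0 < t \<longrightarrow> t \<le> 1 \<longrightarrow> norm x < 10 \<longrightarrow>
          integrable lborel (\<lambda>y. Hprof t \<gamma> (norm (x - y)) * \<nu> y)
        \<and> integrable lborel (\<lambda>y. Htprof t \<gamma> (norm (x - y)) * \<nu> y)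
        \<and> \<bar>convR2 (\<lambda>z. Hprof t \<gamma> (norm z)) \<nu> x\<bar> \<le> K * bound1 N t \<gamma> (norm x)
        \<and> \<bar>convR2 (\<lambda>z. Htprof t \<gamma> (norm z)) \<nu> x\<bar> \<le> K * bound2 N t \<gamma> (norm x))
  \<and> (\<exists>K. \<forall>(N::nat) (\<nu>::real^2 \<Rightarrow> real) t x.
        N \<ge> 1 \<longrightarrow> \<nu> \<in> borel_measurable lborel \<longrightarrow>
        (\<forall>y k. k \<in> lattice2pi \<longrightarrow> \<nu> (y + k) = \<nu> y) \<longrightarrow>
        (\<forall>A\<ge>1. \<forall>y. \<bar>\<nu> y\<bar> \<le> C A * real N ^ 2 * jbr (real N * tnorm y) powr (- A)) \<longrightarrow>
        0 < t \<longrightarrow> t \<le> 1 \<longrightarrow>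
          set_integrable lborel torus_cell (\<lambda>y. Hprof t \<gamma> (tnorm (x - y)) * \<nu> y)
        \<and> set_integrable lborel torus_cell (\<lambda>y. Htprof t \<gamma> (tnorm (x - y)) * \<nu> y)
        \<and> \<bar>convT2 (\<lambda>z. Hprof t \<gamma> (tnorm z)) \<nu> x\<bar> \<le> K * bound1 N t \<gamma> (tnorm x)
        \<and> \<bar>convT2 (\<lambda>z. Htprof t \<gamma> (tnorm z)) \<nu> x\<bar> \<le> K * bound2 N t \<gamma> (tnorm x))"
  using R2_part[OF assms, of C] T_part[OF assms, of C] by blast


end
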